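(* Let $e_1=(1:0:0)$, $e_2=(0:1:0)$, $e_3=(0:0:1)$, $e_4=(1:1:1)$, let $a\vee b$ denote the line through $a,b$, and set $\mathcal T_1=\{(e_1,e_1\vee e_3)\}$, $\mathcal T_2=\{e_2,(e_1,e_1\vee e_3)\}$, $\mathcal T_3=\{(e_1,e_1\vee e_3),(e_2,e_2\vee e_3)\}$, $\mathcal T_4=\{e_2,e_3,(e_1,e_1\vee e_4)\}$. Then for $i=1,2,3,4$ one has $\operatorname{span}(F_{\mathcal T_i})=I_{\mathcal T_i}$.
   Context: $H_k\subseteq\mathbb R[x,y,z]$: real ternary forms of degree $k$; $P_{3,4}=\{f\in H_4: f\ge0\text{ on }\mathbb P^2(\mathbb R)\}$. Local notation. For $p\in\mathbb P^2(\mathbb R)$, affine coordinates centered at $p$ are obtained by an invertible real linear change of coordinates sending $p$ to $(0:0:1)$ and setting $z=1$; $f\in H_4$ becomes $f(x,y)=\sum_{i+j\le4}a_{ij}x^iy^j$, and $\operatorname{ord}_p(f)$ is the least $i+j$ with $a_{ij}\ne0$. For a real line $l\ni p$ choose such coordinates with $l=\{y=0\}$, and for $\operatorname{ord}_pf\ge2$ put $\tilde f(x,y)=f(x,xy)/x^2$. Sets. $F_s=\{f\in P_{3,4}: f(s)=0\}$, $I_s=\{f\in H_4:\operatorname{ord}_sf\ge2\}$; $F_{(p,l)}=\{f\in P_{3,4}: f(p)=0,\ \tilde f(0,0)=0\}$, $I_{(p,l)}=\{f\in H_4: a_{00}=a_{10}=a_{01}=a_{20}=a_{11}=a_{30}=0\}$.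 For a configuration $\mathcal S=\{s_1,\dots,s_n,(p_1,l_1),\dots,(p_m,l_m)\}$ (pairwise distinct real points, real lines $l_j\ni p_j$): $F_{\mathcal S}=\bigcap_iF_{s_i}\cap\bigcap_jF_{(p_j,l_j)}$, $I_{\mathcal S}=\bigcap_iI_{s_i}\cap\bigcap_jI_{(p_j,l_j)}$. *)

theory Defs
  imports "HOL-Analysis.Analysis" "HOL-Library.Function_Algebras"
begin

text \<open>Points of the real projective plane are represented by nonzero vectors of real^3
  (homogeneous coordinates); a ternary form is represented by its evaluation function
  real^3 \<Rightarrow> real. A real projective line is represented by a nonzero normal vector n,
  the line being the set of points v with n \<bullet> v = 0.\<close>

definition monos4 :: "(nat \<times> nat \<times> nat) set" where
  "monos4 = {(i,j,k). i + j + k = 4}"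

definition H4 :: "(real^3 \<Rightarrow> real) set" where
  "H4 = {f. \<exists>c :: nat \<times> nat \<times> nat \<Rightarrow> real. \<forall>v.
      f v = (\<Sum>(i,j,k)\<in>monos4. c (i,j,k) * (v$1)^i * (v$2)^j * (v$3)^k)}"

definition P34 :: "(real^3 \<Rightarrow> real) set" where
  "P34 = {f \<in> H4. \<forall>v. 0 \<le> f v}"

text \<open>The line through two (distinct) points a, b.\<close>
definition join :: "real^3 \<Rightarrow> real^3 \<Rightarrow> real^3" where
  "join a b = cross3 a b"

definition on_line :: "real^3 \<Rightarrow> real^3 \<Rightarrow> bool" where
  "on_line v n \<longleftrightarrow> n \<bullet> v = 0"

definition e1 :: "real^3" where "e1 = vector [1,0,0]"
definition e2 :: "real^3" where "e2 = vector [0,1,0]"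
definition e3 :: "real^3" where "e3 = vector [0,0,1]"
definition e4 :: "real^3" where "e4 = vector [1,1,1]"

text \<open>Affine coordinates centred at p: a matrix B (the inverse of the coordinate change)
  with B invertible and B e3 a representative of p; the form in the new coordinates is
  f(B v), dehomogenised at z = 1. The local coefficients a_ij are those of
  f(B (x,y,1)) = sum a_ij x^i y^j (i+j \<le> 4).\<close>
definition affine_coords_at :: "real^3 \<Rightarrow> real^3^3 \<Rightarrow> bool" where
  "affine_coords_at p B \<longleftrightarrow> invertible B \<and> (\<exists>t. t \<noteq> 0 \<and> B *v e3 = t *\<^sub>R p)"

text \<open>Coordinates centred at p in which the line with normal n becomes {y = 0}:
  the image of the plane y = 0 is the plane of l, i.e. B e1 and B e3 lie on l.\<close>
definition affine_coords_at_line :: "real^3 \<Rightarrow> real^3 \<Rightarrow> real^3^3 \<Rightarrow> bool" where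
  "affine_coords_at_line p n B \<longleftrightarrow> affine_coords_at p B \<and> on_line (B *v e1) n \<and> on_line (B *v e3) n"

definition local_coeffs :: "(real^3 \<Rightarrow> real) \<Rightarrow> real^3^3 \<Rightarrow> (nat \<Rightarrow> nat \<Rightarrow> real) \<Rightarrow> bool" where
  "local_coeffs f B a \<longleftrightarrow>
     (\<forall>x y. f (B *v vector [x, y, 1]) = (\<Sum>(i,j)\<in>{(i,j). i + j \<le> (4::nat)}. a i j * x^i * y^j))"

definition Fpt :: "real^3 \<Rightarrow> (real^3 \<Rightarrow> real) set" where
  "Fpt s = {f \<in> P34. f s = 0}"

definition Ipt :: "real^3 \<Rightarrow> (real^3 \<Rightarrow> real) set" where
  "Ipt s = {f \<in> H4. \<exists>B a. affine_coords_at s B \<and> local_coeffs f B a \<and>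
                       a 0 0 = 0 \<and> a 1 0 = 0 \<and> a 0 1 = 0}"

text \<open>F_(p,l): f(p) = 0 and tilde f(0,0) = 0, where tilde f(x,y) = f(x,xy)/x^2
  (defined since ord_p f \<ge> 2); in local coordinates tilde f(0,0) = a_20.\<close>
definition Fpl :: "real^3 \<Rightarrow> real^3 \<Rightarrow> (real^3 \<Rightarrow> real) set" where
  "Fpl p n = {f \<in> P34. f p = 0 \<and> (\<exists>B a. affine_coords_at_line p n B \<and> local_coeffs f B a \<and>
                       a 0 0 = 0 \<and> a 1 0 = 0 \<and> a 0 1 = 0 \<and> a 2 0 = 0)}"

definition Ipl :: "real^3 \<Rightarrow> real^3 \<Rightarrow> (real^3 \<Rightarrow> real) set" where
  "Ipl p n = {f \<in> H4. \<exists>B a. affine_coords_at_line p n B \<and> local_coeffs f B a \<and>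
     a 0 0 = 0 \<and> a 1 0 = 0 \<and> a 0 1 = 0 \<and> a 2 0 = 0 \<and> a 1 1 = 0 \<and> a 3 0 = 0}"

definition Fconf :: "(real^3) list \<Rightarrow> ((real^3) \<times> (real^3)) list \<Rightarrow> (real^3 \<Rightarrow> real) set" where
  "Fconf ss pls = P34 \<inter> (\<Inter>s\<in>set ss. Fpt s) \<inter> (\<Inter>(p,n)\<in>set pls. Fpl p n)"

definition Iconf :: "(real^3) list \<Rightarrow> ((real^3) \<times> (real^3)) list \<Rightarrow> (real^3 \<Rightarrow> real) set" where
  "Iconf ss pls = H4 \<inter> (\<Inter>s\<in>set ss. Ipt s) \<inter> (\<Inter>(p,n)\<in>set pls. Ipl p n)"

definition fspan :: "(real^3 \<Rightarrow> real) set \<Rightarrow> (real^3 \<Rightarrow> real) set" where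
  "fspan S = module.span (\<lambda>c f. (\<lambda>v. c * f v)) S"

end

theory Submission
  imports Defs "HOL-Computational_Algebra.Polynomial"
begin

lemma D4_eq: "{(i,j). i+j \<le> (4::nat)} = {(0,0),(0,1),(0,2),(0,3),(0,4),(1,0),(1,1),(1,2),(1,3),(2,0),(2,1),(2,2),(3,0),(3,1),(4,0)}"
  (is "?A = ?B")
proof (intro equalityI subsetI)
  fix x assume "x \<in> ?A"
  then obtain i j where x: "x = (i,j)" "i + j \<le> 4" by auto
  then have "i = 0 \<or> i = 1 \<or> i = 2 \<or> i = 3 \<or> i = 4" "j = 0 \<or> j = 1 \<or> j = 2 \<or> j = 3 \<or> j = 4" by arith+
  then show "x \<in> ?B" using x by (elim disjE) simp_all
next
  fix x assume "x \<in> ?B" then show "x \<in> ?A" by (simp, elim disjE, simp_all)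
qed

lemma monos4_eq: "monos4 = {(0,0,4),(0,1,3),(0,2,2),(0,3,1),(0,4,0),(1,0,3),(1,1,2),(1,2,1),(1,3,0),(2,0,2),(2,1,1),(2,2,0),(3,0,1),(3,1,0),(4,0,0)}"
  (is "_ = ?B")
proof (unfold monos4_def, intro equalityI subsetI)
  fix x assume "x \<in> {(i,j,k). i+j+k = (4::nat)}"
  then obtain i j k where x: "x = (i,j,k)" "i + j + k = 4" by auto
  then have "i = 0 \<or> i = 1 \<or> i = 2 \<or> i = 3 \<or> i = 4" "j = 0 \<or> j = 1 \<or> j = 2 \<or> j = 3 \<or> j = 4" by arith+
  then show "x \<in> ?B" using x by (elim disjE) simp_all
next
  fix x assume "x \<in> ?B" then show "x \<in> {(i,j,k). i+j+k = (4::nat)}" by (simp, elim disjE, simp_all)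
qed
lemma fin_D4[simp]: "finite {(i,j). i+j \<le> (4::nat)}" by (simp add: D4_eq)

definition ev :: "real poly poly \<Rightarrow> real \<Rightarrow> real \<Rightarrow> real" where
  "ev P x y = poly (poly P [:y:]) x"

definition mon :: "nat \<Rightarrow> nat \<Rightarrow> real \<Rightarrow> real poly poly" where
  "mon i j c = monom (monom c i) j"

lemma ev_add[simp]: "ev (P + Q) x y = ev P x y + ev Q x y" by (simp add: ev_def)
lemma ev_mult[simp]: "ev (P * Q) x y = ev P x y * ev Q x y" by (simp add: ev_def)
lemma ev_diff[simp]: "ev (P - Q) x y = ev P x y - ev Q x y" by (simp add: ev_def)
lemma ev_power[simp]: "ev (P ^ n) x y = ev P x y ^ n" by (simp add: ev_def poly_power)
lemma ev_sum[simp]: "ev (sum f A) x y = (\<Sum>i\<in>A. ev (f i) x y)" by (simp add: ev_def poly_sum)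
lemma ev_mon[simp]: "ev (mon i j c) x y = c * x^i * y^j"
  by (simp add: ev_def mon_def poly_monom poly_power)

lemma poly_swap: "poly (poly P [:y:]) x = poly (map_poly (\<lambda>c. poly c x) P) y"
  by (induction P) (simp_all add: map_poly_pCons)

lemma ev_inj: assumes "\<And>x y. ev P x y = ev Q x y" shows "P = Q"
proof -
  let ?R = "P - Q"
  have "\<And>x y. ev ?R x y = 0" using assms by simp
  then have "\<And>x. map_poly (\<lambda>c. poly c x) ?R = 0"
    by (metis ev_def poly_all_0_iff_0 poly_swap)
  then have "\<And>x j. poly (coeff ?R j) x = 0"
    by (metis coeff_0 coeff_map_poly poly_0)
  then have "\<And>j. coeff ?R j = 0" by (metis poly_all_0_iff_0)
  then show ?thesis by (metis coeff_0 poly_eqI right_minus_eq)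
qed

definition cf :: "real poly poly \<Rightarrow> nat \<Rightarrow> nat \<Rightarrow> real" where
  "cf P i j = coeff (coeff P j) i"

definition PA :: "(nat \<Rightarrow> nat \<Rightarrow> real) \<Rightarrow> real poly poly" where
  "PA a = (\<Sum>(i,j)\<in>{(i,j). i+j \<le> (4::nat)}. mon i j (a i j))"

lemma ev_PA: "ev (PA a) x y = (\<Sum>(i,j)\<in>{(i,j). i+j \<le> (4::nat)}. a i j * x^i * y^j)"
  unfolding PA_def by (simp add: case_prod_beta)

lemma cf_mon: "cf (mon i j c) k l = (if k = i \<and> l = j then c else 0)"
  by (simp add: cf_def mon_def coeff_monom)

lemma cf_add[simp]: "cf (P + Q) k l = cf P k l + cf Q k l" by (simp add: cf_def)

lemma cf_sum: "cf (sum f A) k l = (\<Sum>i\<in>A. cf (f i) k l)"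
  by (simp add: cf_def coeff_sum)

lemma cf_PA: assumes "k + l \<le> 4" shows "cf (PA a) k l = a k l"
proof -
  have "cf (PA a) k l = (\<Sum>x\<in>{(i,j). i+j \<le> (4::nat)}. (if x = (k,l) then a k l else 0))"
    unfolding PA_def cf_sum by (rule sum.cong) (auto simp: cf_mon split: if_splits)
  also have "\<dots> = a k l" using assms by (subst sum.delta) auto
  finally show ?thesis .
qed

lemma mv3: "((M::real^3^3) *v vector[x,y,z]) $ i = M$i$1*x + M$i$2*y + M$i$3*z"
  by (simp add: matrix_vector_mult_def sum_3)

lemma H4_rep: "f \<in> H4 \<Longrightarrow> \<exists>c. \<forall>v. f v = (\<Sum>(i,j,k)\<in>monos4. c (i,j,k) * (v$1)^i * (v$2)^j * (v$3)^k)"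
  by (simp add: H4_def)

lemma H4_hom: assumes "f \<in> H4" shows "f (t *\<^sub>R v) = t^4 * f v"
proof -
  obtain c where c: "\<And>v. f v = (\<Sum>(i,j,k)\<in>monos4. c (i,j,k) * (v$1)^i * (v$2)^j * (v$3)^k)"
    using H4_rep[OF assms] by blast
  have "f (t *\<^sub>R v) = (\<Sum>(i,j,k)\<in>monos4. t^4 * (c (i,j,k) * (v$1)^i * (v$2)^j * (v$3)^k))"
    unfolding c
  proof (rule sum.cong)
    fix x assume "x \<in> monos4"
    then obtain i j k where x: "x = (i,j,k)" "i+j+k = 4" by (auto simp: monos4_def)
    have "t^(i+j+k) = t^i * t^j * t^k" by (simp add: power_add)
    then have "t^4 = t^i * t^j * t^k" using x(2) by simp
    then show "(case x of (i,j,k) \<Rightarrow> c (i,j,k) * ((t *\<^sub>R v)$1)^i * ((t *\<^sub>R v)$2)^j * ((t *\<^sub>R v)$3)^k)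
      = (case x of (i,j,k) \<Rightarrow> t^4 * (c (i,j,k) * (v$1)^i * (v$2)^j * (v$3)^k))"
      by (simp add: x power_mult_distrib)
  qed simp
  also have "\<dots> = t^4 * f v" unfolding c by (simp add: sum_distrib_left case_prod_beta)
  finally show ?thesis .
qed

lemma eq_at0: fixes g h :: "real \<Rightarrow> real"
  assumes "isCont g 0" "isCont h 0" "\<And>z. z \<noteq> 0 \<Longrightarrow> g z = h z" shows "g 0 = h 0"
proof -
  have "g \<midarrow>0\<rightarrow> g 0" using assms(1) by (simp add: isCont_def)
  moreover have "h \<midarrow>0\<rightarrow> h 0" using assms(2) by (simp add: isCont_def)
  then have "g \<midarrow>0\<rightarrow> h 0" using LIM_equal[of 0 g h] assms(3) by auto
  ultimately show ?thesis using LIM_unique by blast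
qed

lemma term_hom: fixes X Y Z a :: real assumes "i + j \<le> 4" "Z \<noteq> 0"
  shows "Z^4 * (a * (X/Z)^i * (Y/Z)^j) = a * X^i * Y^j * Z^(4-i-j)"
proof -
  have e: "i + j + (4-i-j) = 4" using assms(1) by simp
  have "Z^(i + j + (4-i-j)) = Z^i * Z^j * Z^(4-i-j)" by (simp add: power_add)
  then have z: "Z^4 = Z^i * Z^j * Z^(4-i-j)" unfolding e .
  have xi: "(X/Z)^i * Z^i = X^i" using assms(2) by (simp add: power_divide)
  have yj: "(Y/Z)^j * Z^j = Y^j" using assms(2) by (simp add: power_divide)
  have "Z^4 * (a * (X/Z)^i * (Y/Z)^j) = a * ((X/Z)^i * Z^i) * ((Y/Z)^j * Z^j) * Z^(4-i-j)"
    unfolding z by (simp only: mult_ac)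
  then show ?thesis unfolding xi yj .
qed

lemma homext: assumes "f \<in> H4" "local_coeffs f B a"
  shows "f (B *v vector[X,Y,Z]) = (\<Sum>(i,j)\<in>{(i,j). i+j \<le> (4::nat)}. a i j * X^i * Y^j * Z^(4-i-j))"
proof -
  have main: "f (B *v vector[X,Y,Z]) = (\<Sum>(i,j)\<in>{(i,j). i+j \<le> (4::nat)}. a i j * X^i * Y^j * Z^(4-i-j))"
    if Z: "Z \<noteq> 0" for Z
  proof -
    have "vector[X,Y,Z] = Z *\<^sub>R (vector[X/Z, Y/Z, 1] :: real^3)"
      using Z by (simp add: vec_eq_iff forall_3)
    then have "f (B *v vector[X,Y,Z]) = Z^4 * f (B *v vector[X/Z, Y/Z, 1])"
      by (simp add: matrix_vector_mult_scaleR H4_hom[OF assms(1)])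
    also have "\<dots> = Z^4 * (\<Sum>(i,j)\<in>{(i,j). i+j \<le> (4::nat)}. a i j * (X/Z)^i * (Y/Z)^j)"
      using assms(2) by (simp add: local_coeffs_def)
    also have "\<dots> = (\<Sum>(i,j)\<in>{(i,j). i+j \<le> (4::nat)}. a i j * X^i * Y^j * Z^(4-i-j))"
      unfolding sum_distrib_left by (rule sum.cong) (auto simp: term_hom Z)
    finally show ?thesis .
  qed
  show ?thesis
  proof (cases "Z = 0")
    case False then show ?thesis by (rule main)
  next
    case True
    obtain c where c: "\<And>v. f v = (\<Sum>(i,j,k)\<in>monos4. c (i,j,k) * (v$1)^i * (v$2)^j * (v$3)^k)"
      using H4_rep[OF assms(1)] by blast
    define g where "g = (\<lambda>z. f (B *v vector[X,Y,z]))"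
    define h where "h = (\<lambda>z. (\<Sum>(i,j)\<in>{(i,j). i+j \<le> (4::nat)}. a i j * X^i * Y^j * z^(4-i-j)))"
    have g: "g = (\<lambda>z. (\<Sum>x\<in>monos4. c x * (B$1$1*X + B$1$2*Y + B$1$3*z)^(fst x)
          * (B$2$1*X + B$2$2*Y + B$2$3*z)^(fst (snd x)) * (B$3$1*X + B$3$2*Y + B$3$3*z)^(snd (snd x))))"
      unfolding g_def c by (simp add: mv3 case_prod_beta)
    have "isCont g 0" unfolding g by (intro continuous_intros)
    moreover have "isCont h 0" unfolding h_def by (simp add: case_prod_beta)
    moreover have "\<And>z. z \<noteq> 0 \<Longrightarrow> g z = h z" unfolding g_def h_def by (rule main)
    ultimately have "g 0 = h 0" by (rule eq_at0)
    then show ?thesis using True unfolding g_def h_def by simp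
  qed
qed

lemma e3_mv: "((N::real^3^3) *v e3) $ i = N$i$3" by (simp add: e3_def mv3)
lemma e1_mv: "((N::real^3^3) *v e1) $ i = N$i$1" by (simp add: e1_def mv3)

lemma chart_change:
  fixes B B' :: "real^3^3"
  assumes cB: "affine_coords_at p B" and cB': "affine_coords_at p B'"
  obtains N :: "real^3^3" where "N$1$3 = 0" "N$2$3 = 0" "N$3$3 \<noteq> 0" "B ** N = B'"
proof -
  obtain A where A: "B ** A = mat 1" "A ** B = mat 1" using cB unfolding affine_coords_at_def invertible_def by blast
  obtain t where t: "t \<noteq> 0" "B *v e3 = t *\<^sub>R p" using cB unfolding affine_coords_at_def by blast
  obtain t' where t': "t' \<noteq> 0" "B' *v e3 = t' *\<^sub>R p" using cB' unfolding affine_coords_at_def by blast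
  define N where "N = A ** B'"
  have BN: "B ** N = B'" unfolding N_def by (simp add: matrix_mul_assoc A)
  have "p = (1/t) *\<^sub>R (B *v e3)" using t by simp
  then have "N *v e3 = (t'/t) *\<^sub>R (A *v (B *v e3))"
    unfolding N_def by (simp add: matrix_vector_mul_assoc[symmetric] t' matrix_vector_mult_scaleR)
  also have "\<dots> = (t'/t) *\<^sub>R e3" by (simp add: matrix_vector_mul_assoc A)
  finally have Ne3: "N *v e3 = (t'/t) *\<^sub>R e3" .
  have h: "\<And>i. N$i$3 = (t'/t) * e3$i"
  proof -
    fix i
    have "(N *v e3)$i = ((t'/t) *\<^sub>R e3)$i" using Ne3 by simp
    then show "N$i$3 = (t'/t) * e3$i" by (simp add: e3_mv)
  qed
  have "N$1$3 = 0" "N$2$3 = 0" "N$3$3 = t'/t"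
    using h[of 1] h[of 2] h[of 3] by (simp_all add: e3_def)
  then show ?thesis using that BN t t' by simp
qed

lemma line_N21:
  fixes B B' N :: "real^3^3"
  assumes "n \<noteq> 0" "invertible B" "on_line (B *v e1) n" "on_line (B *v e3) n"
    "on_line (B' *v e1) n" "B ** N = B'"
  shows "N$2$1 = 0"
proof -
  obtain A where A: "B ** A = mat 1" "A ** B = mat 1" using assms(2) unfolding invertible_def by blast
  define u where "u = n v* B"
  have uv: "\<And>v. n \<bullet> (B *v v) = u \<bullet> v" unfolding u_def by (simp add: dot_lmul_matrix)
  have "u \<bullet> e1 = 0" "u \<bullet> e3 = 0" using assms(3,4) uv unfolding on_line_def by auto
  then have u13: "u$1 = 0" "u$3 = 0" by (simp_all add: inner_vec_def sum_3 e1_def e3_def)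
  have "u \<noteq> 0"
  proof
    assume "u = 0"
    then have "n v* (B ** A) = 0" unfolding u_def by (simp add: vector_matrix_mul_assoc[symmetric])
    then have "n = 0" unfolding A(1) by (simp add: vector_matrix_mul_rid)
    then show False using assms(1) by simp
  qed
  with u13 have u2: "u$2 \<noteq> 0" by (auto simp: vec_eq_iff forall_3)
  have "0 = n \<bullet> (B *v (N *v e1))" using assms(5,6) unfolding on_line_def by (simp add: matrix_vector_mul_assoc)
  also have "\<dots> = u \<bullet> (N *v e1)" by (rule uv)
  also have "\<dots> = u$2 * N$2$1" by (simp add: inner_vec_def sum_3 u13 e1_mv)
  finally show ?thesis using u2 by simp
qed

lemma transfer:
  assumes f: "f \<in> H4" and la: "local_coeffs f B a" and la': "local_coeffs f B' a'"
    and N: "B ** N = B'" "N$1$3 = 0" "N$2$3 = 0"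
  shows "(\<Sum>(i,j)\<in>{(i,j). i+j \<le> (4::nat)}. a' i j * x^i * y^j)
       = (\<Sum>(i,j)\<in>{(i,j). i+j \<le> (4::nat)}. a i j * (N$1$1*x + N$1$2*y)^i * (N$2$1*x + N$2$2*y)^j
            * (N$3$1*x + N$3$2*y + N$3$3)^(4-i-j))"
proof -
  have v: "N *v vector[x,y,1] = vector[N$1$1*x + N$1$2*y, N$2$1*x + N$2$2*y, N$3$1*x + N$3$2*y + N$3$3]"
    using N by (simp add: vec_eq_iff forall_3 mv3)
  have "(\<Sum>(i,j)\<in>{(i,j). i+j \<le> (4::nat)}. a' i j * x^i * y^j) = f (B' *v vector[x,y,1])"
    using la' by (simp add: local_coeffs_def)
  also have "\<dots> = f (B *v (N *v vector[x,y,1]))" using N by (simp add: matrix_vector_mul_assoc)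
  also have "\<dots> = f (B *v vector[N$1$1*x + N$1$2*y, N$2$1*x + N$2$2*y, N$3$1*x + N$3$2*y + N$3$3])"
    unfolding v ..
  also note homext[OF f la]
  finally show ?thesis .
qed

definition XX :: "real poly poly" where "XX = mon 1 0 1"
definition YY :: "real poly poly" where "YY = mon 0 1 1"
definition Cc :: "real \<Rightarrow> real poly poly" where "Cc c = mon 0 0 c"

lemma ev_XX[simp]: "ev XX x y = x" by (simp add: XX_def)
lemma ev_YY[simp]: "ev YY x y = y" by (simp add: YY_def)
lemma ev_Cc[simp]: "ev (Cc c) x y = c" by (simp add: Cc_def)
lemma Cc0[simp]: "Cc 0 = 0" by (simp add: Cc_def mon_def)

lemma mon_XY: "mon a b 1 = XX^a * YY^b"
  by (simp add: XX_def YY_def mon_def monom_power mult_monom)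

lemma cf_monq: "cf (mon a b 1 * q) i j = (if j < b then 0 else if i < a then 0 else cf q (i-a) (j-b))"
  by (simp add: cf_def mon_def coeff_monom_mult)

definition J3i :: "real poly poly \<Rightarrow> bool" where
  "J3i P \<longleftrightarrow> (\<exists>q1 q2 q3. P = XX^2*q1 + XX*YY*q2 + YY^2*q3)"
definition J4i :: "real poly poly \<Rightarrow> bool" where
  "J4i P \<longleftrightarrow> (\<exists>q1 q2 q3. P = XX*YY*q1 + YY^2*q2 + XX^3*q3)"
definition J6i :: "real poly poly \<Rightarrow> bool" where
  "J6i P \<longleftrightarrow> (\<exists>q1 q2 q3. P = YY^2*q1 + XX^2*YY*q2 + XX^4*q3)"

lemma J3_add: assumes "J3i P" "J3i Q" shows "J3i (P+Q)"
proof -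
  obtain q1 q2 q3 where P: "P = XX^2*q1 + XX*YY*q2 + YY^2*q3" using assms(1) unfolding J3i_def by blast
  obtain r1 r2 r3 where Q: "Q = XX^2*r1 + XX*YY*r2 + YY^2*r3" using assms(2) unfolding J3i_def by blast
  have "P + Q = XX^2*(q1+r1) + XX*YY*(q2+r2) + YY^2*(q3+r3)"
    unfolding P Q by (simp add: distrib_left)
  then show ?thesis unfolding J3i_def by blast
qed
lemma J4_add: assumes "J4i P" "J4i Q" shows "J4i (P+Q)"
proof -
  obtain q1 q2 q3 where P: "P = XX*YY*q1 + YY^2*q2 + XX^3*q3" using assms(1) unfolding J4i_def by blast
  obtain r1 r2 r3 where Q: "Q = XX*YY*r1 + YY^2*r2 + XX^3*r3" using assms(2) unfolding J4i_def by blast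
  have "P + Q = XX*YY*(q1+r1) + YY^2*(q2+r2) + XX^3*(q3+r3)"
    unfolding P Q by (simp add: distrib_left)
  then show ?thesis unfolding J4i_def by blast
qed
lemma J6_add: assumes "J6i P" "J6i Q" shows "J6i (P+Q)"
proof -
  obtain q1 q2 q3 where P: "P = YY^2*q1 + XX^2*YY*q2 + XX^4*q3" using assms(1) unfolding J6i_def by blast
  obtain r1 r2 r3 where Q: "Q = YY^2*r1 + XX^2*YY*r2 + XX^4*r3" using assms(2) unfolding J6i_def by blast
  have "P + Q = YY^2*(q1+r1) + XX^2*YY*(q2+r2) + XX^4*(q3+r3)"
    unfolding P Q by (simp add: distrib_left)
  then show ?thesis unfolding J6i_def by blast
qed
lemma J3_mult: assumes "J3i P" shows "J3i (P*Q)"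
proof -
  obtain q1 q2 q3 where P: "P = XX^2*q1 + XX*YY*q2 + YY^2*q3" using assms(1) unfolding J3i_def by blast
  have "P * Q = XX^2*(q1*Q) + XX*YY*(q2*Q) + YY^2*(q3*Q)"
    unfolding P by (simp add: distrib_right mult.assoc)
  then show ?thesis unfolding J3i_def by blast
qed
lemma J4_mult: assumes "J4i P" shows "J4i (P*Q)"
proof -
  obtain q1 q2 q3 where P: "P = XX*YY*q1 + YY^2*q2 + XX^3*q3" using assms(1) unfolding J4i_def by blast
  have "P * Q = XX*YY*(q1*Q) + YY^2*(q2*Q) + XX^3*(q3*Q)"
    unfolding P by (simp add: distrib_right mult.assoc)
  then show ?thesis unfolding J4i_def by blast
qed
lemma J6_mult: assumes "J6i P" shows "J6i (P*Q)"
proof -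
  obtain q1 q2 q3 where P: "P = YY^2*q1 + XX^2*YY*q2 + XX^4*q3" using assms(1) unfolding J6i_def by blast
  have "P * Q = YY^2*(q1*Q) + XX^2*YY*(q2*Q) + XX^4*(q3*Q)"
    unfolding P by (simp add: distrib_right mult.assoc)
  then show ?thesis unfolding J6i_def by blast
qed
lemma J3_0: "J3i 0" unfolding J3i_def by (rule exI[of _ 0])+ simp
lemma J4_0: "J4i 0" unfolding J4i_def by (rule exI[of _ 0])+ simp
lemma J6_0: "J6i 0" unfolding J6i_def by (rule exI[of _ 0])+ simp

lemma J3_sum: "(\<And>x. x \<in> A \<Longrightarrow> J3i (f x)) \<Longrightarrow> J3i (sum f A)"
  by (induction A rule: infinite_finite_induct) (auto simp: J3_0 J3_add)
lemma J4_sum: "(\<And>x. x \<in> A \<Longrightarrow> J4i (f x)) \<Longrightarrow> J4i (sum f A)"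
  by (induction A rule: infinite_finite_induct) (auto simp: J4_0 J4_add)
lemma J6_sum: "(\<And>x. x \<in> A \<Longrightarrow> J6i (f x)) \<Longrightarrow> J6i (sum f A)"
  by (induction A rule: infinite_finite_induct) (auto simp: J6_0 J6_add)

lemma J3_cf: assumes "J3i P" shows "cf P 0 0 = 0" "cf P 1 0 = 0" "cf P 0 1 = 0"
proof -
  obtain q1 q2 q3 where P: "P = mon 2 0 1*q1 + mon 1 1 1*q2 + mon 0 2 1*q3"
    using assms unfolding J3i_def mon_XY by auto
  show "cf P 0 0 = 0" "cf P 1 0 = 0" "cf P 0 1 = 0" unfolding P by (simp_all add: cf_monq)
qed
lemma J4_cf: assumes "J4i P" shows "cf P 0 0 = 0" "cf P 1 0 = 0" "cf P 0 1 = 0" "cf P 2 0 = 0"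
proof -
  obtain q1 q2 q3 where P: "P = mon 1 1 1*q1 + mon 0 2 1*q2 + mon 3 0 1*q3"
    using assms unfolding J4i_def mon_XY by auto
  show "cf P 0 0 = 0" "cf P 1 0 = 0" "cf P 0 1 = 0" "cf P 2 0 = 0" unfolding P by (simp_all add: cf_monq)
qed
lemma J6_cf: assumes "J6i P" shows "cf P 0 0 = 0" "cf P 1 0 = 0" "cf P 0 1 = 0" "cf P 2 0 = 0"
   "cf P 1 1 = 0" "cf P 3 0 = 0"
proof -
  obtain q1 q2 q3 where P: "P = mon 0 2 1*q1 + mon 2 1 1*q2 + mon 4 0 1*q3"
    using assms unfolding J6i_def mon_XY by auto
  show "cf P 0 0 = 0" "cf P 1 0 = 0" "cf P 0 1 = 0" "cf P 2 0 = 0" "cf P 1 1 = 0" "cf P 3 0 = 0"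
    unfolding P by (simp_all add: cf_monq)
qed

lemma J6_g1: "J6i ((Cc u * XX + Cc v * YY)^2 * (Cc w * YY))"
proof -
  have "(Cc u * XX + Cc v * YY)^2 * (Cc w * YY) = YY^2 * ((2 * XX * Cc u * Cc v + YY * Cc v^2) * Cc w)
     + XX^2*YY*(Cc u^2 * Cc w) + XX^4 * 0" by algebra
  then show ?thesis unfolding J6i_def by blast
qed
lemma J6_g2: "J6i ((Cc w * YY)^2)"
proof -
  have "(Cc w * YY)^2 = YY^2 * Cc w^2 + XX^2*YY*0 + XX^4 * 0" by algebra
  then show ?thesis unfolding J6i_def by blast
qed
lemma J6_g3: "J6i ((Cc u * XX + Cc v * YY)^4)"
proof -
  have "(Cc u * XX + Cc v * YY)^4 = YY^2 * (6 * Cc u^2 * Cc v^2 * XX^2 + 4 * Cc u * Cc v^3 * XX * YY + Cc v^4 * YY^2)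
     + XX^2*YY*(4 * Cc u^3 * Cc v * XX) + XX^4 * Cc u^4" by algebra
  then show ?thesis unfolding J6i_def by blast
qed
lemma J4_g1: "J4i ((Cc u * XX + Cc v * YY) * (Cc w * YY))"
proof -
  have "(Cc u * XX + Cc v * YY) * (Cc w * YY) = XX*YY*(Cc u * Cc w) + YY^2*(Cc v * Cc w) + XX^3*0" by algebra
  then show ?thesis unfolding J4i_def by blast
qed
lemma J4_g2: "J4i ((Cc w * YY)^2)"
proof -
  have "(Cc w * YY)^2 = XX*YY*0 + YY^2*(Cc w^2) + XX^3*0" by algebra
  then show ?thesis unfolding J4i_def by blast
qed
lemma J4_g3: "J4i ((Cc u * XX + Cc v * YY)^3)"
proof -
  have "(Cc u * XX + Cc v * YY)^3 = XX*YY*(3 * Cc u^2 * Cc v * XX) + YY^2*(3 * Cc u * Cc v^2 * XX + Cc v^3 * YY)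
     + XX^3*Cc u^3" by algebra
  then show ?thesis unfolding J4i_def by blast
qed
lemma J3_g: "J3i ((Cc a * XX + Cc b * YY) * (Cc c * XX + Cc d * YY))"
proof -
  have "(Cc a * XX + Cc b * YY) * (Cc c * XX + Cc d * YY) = XX^2*(Cc a * Cc c) + XX*YY*(Cc a * Cc d + Cc b * Cc c)
     + YY^2*(Cc b * Cc d)" by algebra
  then show ?thesis unfolding J3i_def by blast
qed


lemma pow_split: "(j::nat) \<ge> k \<Longrightarrow> (W::real poly poly)^j = W^k * W^(j-k)"
  by (metis le_add_diff_inverse power_add)

lemma J6_term:
  assumes "i + j \<le> 4" "(i,j) \<notin> {(0,0),(1,0),(0,1),(2,0),(1,1),(3,0)}"
  shows "J6i ((Cc u * XX + Cc v * YY)^i * (Cc w * YY)^j * R)"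
proof -
  let ?W1 = "Cc u * XX + Cc v * YY" and ?W2 = "Cc w * YY"
  have c: "j \<ge> 2 \<or> (j = 1 \<and> i \<ge> 2) \<or> (j = 0 \<and> i = 4)" using assms by auto
  then show ?thesis
  proof (elim disjE conjE)
    assume j: "j \<ge> 2"
    have eq: "?W1^i * ?W2^j * R = ?W2^2 * (?W1^i * ?W2^(j-2) * R)"
      using pow_split[OF j, of ?W2] by (simp add: mult_ac)
    show ?thesis unfolding eq by (rule J6_mult[OF J6_g2])
  next
    assume j: "j = 1" and i: "i \<ge> 2"
    have eq: "?W1^i * ?W2^j * R = (?W1^2 * ?W2) * (?W1^(i-2) * R)"
      using pow_split[OF i, of ?W1] j by (simp add: mult_ac)
    show ?thesis unfolding eq by (rule J6_mult[OF J6_g1])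
  next
    assume "j = 0" "i = 4"
    then have eq: "?W1^i * ?W2^j * R = ?W1^4 * R" by simp
    show ?thesis unfolding eq by (rule J6_mult[OF J6_g3])
  qed
qed

lemma J4_term:
  assumes "i + j \<le> 4" "(i,j) \<notin> {(0,0),(1,0),(0,1),(2,0)}"
  shows "J4i ((Cc u * XX + Cc v * YY)^i * (Cc w * YY)^j * R)"
proof -
  let ?W1 = "Cc u * XX + Cc v * YY" and ?W2 = "Cc w * YY"
  have c: "j \<ge> 2 \<or> (j \<ge> 1 \<and> i \<ge> 1) \<or> (i \<ge> 3)" using assms by auto
  then show ?thesis
  proof (elim disjE conjE)
    assume j: "j \<ge> 2"
    have eq: "?W1^i * ?W2^j * R = ?W2^2 * (?W1^i * ?W2^(j-2) * R)"
      using pow_split[OF j, of ?W2] by (simp add: mult_ac)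
    show ?thesis unfolding eq by (rule J4_mult[OF J4_g2])
  next
    assume j: "j \<ge> 1" and i: "i \<ge> 1"
    have eq: "?W1^i * ?W2^j * R = (?W1 * ?W2) * (?W1^(i-1) * ?W2^(j-1) * R)"
      using pow_split[OF i, of ?W1] pow_split[OF j, of ?W2] by (simp add: mult_ac)
    show ?thesis unfolding eq by (rule J4_mult[OF J4_g1])
  next
    assume i: "i \<ge> 3"
    have eq: "?W1^i * ?W2^j * R = ?W1^3 * (?W1^(i-3) * ?W2^j * R)"
      using pow_split[OF i, of ?W1] by (simp add: mult_ac)
    show ?thesis unfolding eq by (rule J4_mult[OF J4_g3])
  qed
qed

lemma J3_term:
  assumes "i + j \<le> 4" "(i,j) \<notin> {(0,0),(1,0),(0,1)}"
  shows "J3i ((Cc u1 * XX + Cc v1 * YY)^i * (Cc u2 * XX + Cc v2 * YY)^j * R)"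
proof -
  let ?W1 = "Cc u1 * XX + Cc v1 * YY" and ?W2 = "Cc u2 * XX + Cc v2 * YY"
  have c: "i \<ge> 2 \<or> (j \<ge> 1 \<and> i \<ge> 1) \<or> (j \<ge> 2)" using assms by auto
  then show ?thesis
  proof (elim disjE conjE)
    assume i: "i \<ge> 2"
    have eq: "?W1^i * ?W2^j * R = (?W1 * ?W1) * (?W1^(i-2) * ?W2^j * R)"
      using pow_split[OF i, of ?W1] by (simp add: mult_ac power2_eq_square)
    show ?thesis unfolding eq by (rule J3_mult[OF J3_g])
  next
    assume j: "j \<ge> 1" and i: "i \<ge> 1"
    have eq: "?W1^i * ?W2^j * R = (?W1 * ?W2) * (?W1^(i-1) * ?W2^(j-1) * R)"
      using pow_split[OF i, of ?W1] pow_split[OF j, of ?W2] by (simp add: mult_ac)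
    show ?thesis unfolding eq by (rule J3_mult[OF J3_g])
  next
    assume j: "j \<ge> 2"
    have eq: "?W1^i * ?W2^j * R = (?W2 * ?W2) * (?W1^i * ?W2^(j-2) * R)"
      using pow_split[OF j, of ?W2] by (simp add: mult_ac power2_eq_square)
    show ?thesis unfolding eq by (rule J3_mult[OF J3_g])
  qed
qed

abbreviation "DD \<equiv> {(i,j). i+j \<le> (4::nat)}"

lemma inv6:
  fixes a a' :: "nat \<Rightarrow> nat \<Rightarrow> real" and u1 v1 u2 v2 n1 n2 n3 :: real
  assumes eq: "\<And>x y. (\<Sum>(i,j)\<in>DD. a' i j * x^i * y^j) = (\<Sum>(i,j)\<in>DD. a i j * (u1*x + v1*y)^i * (u2*x + v2*y)^j * (n1*x + n2*y + n3)^(4-i-j))"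
    and u2: "u2 = 0"
    and a: "a 0 0 = 0" "a 1 0 = 0" "a 0 1 = 0" "a 2 0 = 0" "a 1 1 = 0" "a 3 0 = 0"
  shows "a' 0 0 = 0 \<and> a' 1 0 = 0 \<and> a' 0 1 = 0 \<and> a' 2 0 = 0 \<and> a' 1 1 = 0 \<and> a' 3 0 = 0"
proof -
  define PH where "PH = (\<Sum>(i,j)\<in>DD. (Cc u1*XX + Cc v1*YY)^i * (Cc v2*YY)^j * (Cc (a i j) * (Cc n1*XX + Cc n2*YY + Cc n3)^(4-i-j)))"
  have PA: "PA a' = PH"
  proof (rule ev_inj)
    fix x y
    have "ev (PA a') x y = (\<Sum>(i,j)\<in>DD. a' i j * x^i * y^j)" by (simp add: ev_PA)
    also have "\<dots> = (\<Sum>(i,j)\<in>DD. a i j * (u1*x + v1*y)^i * (u2*x + v2*y)^j * (n1*x + n2*y + n3)^(4-i-j))"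
      by (rule eq)
    also have "\<dots> = ev PH x y" by (simp add: PH_def u2 case_prod_beta mult_ac)
    finally show "ev (PA a') x y = ev PH x y" .
  qed
  have "J6i PH" unfolding PH_def
  proof (rule J6_sum)
    fix x assume "x \<in> DD" then obtain i j where x: "x = (i,j)" "i+j \<le> 4" by auto
    show "J6i (case x of (i,j) \<Rightarrow> (Cc u1*XX + Cc v1*YY)^i * (Cc v2*YY)^j * (Cc (a i j) * (Cc n1*XX + Cc n2*YY + Cc n3)^(4-i-j)))"
    proof (cases "(i,j) \<in> {(0,0),(1,0),(0,1),(2,0),(1,1),(3,0)}")
      case True then have "a i j = 0" using a by auto
      then show ?thesis by (simp add: x J6_0)
    next
      case False then show ?thesis using J6_term[OF x(2) False] by (simp add: x)
    qed
  qed
  then show ?thesis using J6_cf[of PH] cf_PA[of _ _ a'] unfolding PA[symmetric] by simp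
qed

lemma inv4:
  fixes a a' :: "nat \<Rightarrow> nat \<Rightarrow> real" and u1 v1 u2 v2 n1 n2 n3 :: real
  assumes eq: "\<And>x y. (\<Sum>(i,j)\<in>DD. a' i j * x^i * y^j) = (\<Sum>(i,j)\<in>DD. a i j * (u1*x + v1*y)^i * (u2*x + v2*y)^j * (n1*x + n2*y + n3)^(4-i-j))"
    and u2: "u2 = 0"
    and a: "a 0 0 = 0" "a 1 0 = 0" "a 0 1 = 0" "a 2 0 = 0"
  shows "a' 0 0 = 0 \<and> a' 1 0 = 0 \<and> a' 0 1 = 0 \<and> a' 2 0 = 0"
proof -
  define PH where "PH = (\<Sum>(i,j)\<in>DD. (Cc u1*XX + Cc v1*YY)^i * (Cc v2*YY)^j * (Cc (a i j) * (Cc n1*XX + Cc n2*YY + Cc n3)^(4-i-j)))"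
  have PA: "PA a' = PH"
  proof (rule ev_inj)
    fix x y
    have "ev (PA a') x y = (\<Sum>(i,j)\<in>DD. a' i j * x^i * y^j)" by (simp add: ev_PA)
    also have "\<dots> = (\<Sum>(i,j)\<in>DD. a i j * (u1*x + v1*y)^i * (u2*x + v2*y)^j * (n1*x + n2*y + n3)^(4-i-j))"
      by (rule eq)
    also have "\<dots> = ev PH x y" by (simp add: PH_def u2 case_prod_beta mult_ac)
    finally show "ev (PA a') x y = ev PH x y" .
  qed
  have "J4i PH" unfolding PH_def
  proof (rule J4_sum)
    fix x assume "x \<in> DD" then obtain i j where x: "x = (i,j)" "i+j \<le> 4" by auto
    show "J4i (case x of (i,j) \<Rightarrow> (Cc u1*XX + Cc v1*YY)^i * (Cc v2*YY)^j * (Cc (a i j) * (Cc n1*XX + Cc n2*YY + Cc n3)^(4-i-j)))"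
    proof (cases "(i,j) \<in> {(0,0),(1,0),(0,1),(2,0)}")
      case True then have "a i j = 0" using a by auto
      then show ?thesis by (simp add: x J4_0)
    next
      case False then show ?thesis using J4_term[OF x(2) False] by (simp add: x)
    qed
  qed
  then show ?thesis using J4_cf[of PH] cf_PA[of _ _ a'] unfolding PA[symmetric] by simp
qed

lemma inv3:
  fixes a a' :: "nat \<Rightarrow> nat \<Rightarrow> real" and u1 v1 u2 v2 n1 n2 n3 :: real
  assumes eq: "\<And>x y. (\<Sum>(i,j)\<in>DD. a' i j * x^i * y^j) = (\<Sum>(i,j)\<in>DD. a i j * (u1*x + v1*y)^i * (u2*x + v2*y)^j * (n1*x + n2*y + n3)^(4-i-j))"
    and a: "a 0 0 = 0" "a 1 0 = 0" "a 0 1 = 0"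
  shows "a' 0 0 = 0 \<and> a' 1 0 = 0 \<and> a' 0 1 = 0"
proof -
  define PH where "PH = (\<Sum>(i,j)\<in>DD. (Cc u1*XX + Cc v1*YY)^i * (Cc u2*XX + Cc v2*YY)^j * (Cc (a i j) * (Cc n1*XX + Cc n2*YY + Cc n3)^(4-i-j)))"
  have PA: "PA a' = PH"
  proof (rule ev_inj)
    fix x y
    have "ev (PA a') x y = (\<Sum>(i,j)\<in>DD. a' i j * x^i * y^j)" by (simp add: ev_PA)
    also have "\<dots> = (\<Sum>(i,j)\<in>DD. a i j * (u1*x + v1*y)^i * (u2*x + v2*y)^j * (n1*x + n2*y + n3)^(4-i-j))"
      by (rule eq)
    also have "\<dots> = ev PH x y" by (simp add: PH_def case_prod_beta mult_ac)
    finally show "ev (PA a') x y = ev PH x y" .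
  qed
  have "J3i PH" unfolding PH_def
  proof (rule J3_sum)
    fix x assume "x \<in> DD" then obtain i j where x: "x = (i,j)" "i+j \<le> 4" by auto
    show "J3i (case x of (i,j) \<Rightarrow> (Cc u1*XX + Cc v1*YY)^i * (Cc u2*XX + Cc v2*YY)^j * (Cc (a i j) * (Cc n1*XX + Cc n2*YY + Cc n3)^(4-i-j)))"
    proof (cases "(i,j) \<in> {(0,0),(1,0),(0,1)}")
      case True then have "a i j = 0" using a by auto
      then show ?thesis by (simp add: x J3_0)
    next
      case False then show ?thesis using J3_term[OF x(2) False] by (simp add: x)
    qed
  qed
  then show ?thesis using J3_cf[of PH] cf_PA[of _ _ a'] unfolding PA[symmetric] by simp
qed

lemma Ipl_canon:
  assumes n: "n \<noteq> 0" and B0: "affine_coords_at_line p n B0" and f: "f \<in> H4" and a0: "local_coeffs f B0 a0"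
  shows "f \<in> Ipl p n \<longleftrightarrow> (a0 0 0 = 0 \<and> a0 1 0 = 0 \<and> a0 0 1 = 0 \<and> a0 2 0 = 0 \<and> a0 1 1 = 0 \<and> a0 3 0 = 0)"
proof
  assume "f \<in> Ipl p n"
  then obtain B a where B: "affine_coords_at_line p n B" and a: "local_coeffs f B a"
    and c: "a 0 0 = 0" "a 1 0 = 0" "a 0 1 = 0" "a 2 0 = 0" "a 1 1 = 0" "a 3 0 = 0"
    unfolding Ipl_def by blast
  obtain N where N: "N$1$3 = 0" "N$2$3 = 0" "N$3$3 \<noteq> 0" "B ** N = B0"
    using chart_change[of p B B0] B B0 unfolding affine_coords_at_line_def by blast
  have N21: "N$2$1 = 0"
    using line_N21[OF n _ _ _ _ N(4)] B B0 unfolding affine_coords_at_line_def affine_coords_at_def by blast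
  show "a0 0 0 = 0 \<and> a0 1 0 = 0 \<and> a0 0 1 = 0 \<and> a0 2 0 = 0 \<and> a0 1 1 = 0 \<and> a0 3 0 = 0"
    by (rule inv6[OF transfer[OF f a a0 N(4) N(1) N(2)] N21 c])
next
  assume "a0 0 0 = 0 \<and> a0 1 0 = 0 \<and> a0 0 1 = 0 \<and> a0 2 0 = 0 \<and> a0 1 1 = 0 \<and> a0 3 0 = 0"
  then show "f \<in> Ipl p n" unfolding Ipl_def using f B0 a0 by blast
qed

lemma Fpl_canon:
  assumes n: "n \<noteq> 0" and B0: "affine_coords_at_line p n B0" and f: "f \<in> H4" and a0: "local_coeffs f B0 a0"
  shows "f \<in> Fpl p n \<longleftrightarrow> f \<in> P34 \<and> f p = 0 \<and> (a0 0 0 = 0 \<and> a0 1 0 = 0 \<and> a0 0 1 = 0 \<and> a0 2 0 = 0)"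
proof
  assume "f \<in> Fpl p n"
  then obtain B a where P: "f \<in> P34" "f p = 0" and B: "affine_coords_at_line p n B" and a: "local_coeffs f B a"
    and c: "a 0 0 = 0" "a 1 0 = 0" "a 0 1 = 0" "a 2 0 = 0"
    unfolding Fpl_def by blast
  obtain N where N: "N$1$3 = 0" "N$2$3 = 0" "N$3$3 \<noteq> 0" "B ** N = B0"
    using chart_change[of p B B0] B B0 unfolding affine_coords_at_line_def by blast
  have N21: "N$2$1 = 0"
    using line_N21[OF n _ _ _ _ N(4)] B B0 unfolding affine_coords_at_line_def affine_coords_at_def by blast
  show "f \<in> P34 \<and> f p = 0 \<and> (a0 0 0 = 0 \<and> a0 1 0 = 0 \<and> a0 0 1 = 0 \<and> a0 2 0 = 0)"
    using inv4[OF transfer[OF f a a0 N(4) N(1) N(2)] N21 c] P by blast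
next
  assume "f \<in> P34 \<and> f p = 0 \<and> (a0 0 0 = 0 \<and> a0 1 0 = 0 \<and> a0 0 1 = 0 \<and> a0 2 0 = 0)"
  then show "f \<in> Fpl p n" unfolding Fpl_def using f B0 a0 by blast
qed

lemma Ipt_canon:
  assumes B0: "affine_coords_at p B0" and f: "f \<in> H4" and a0: "local_coeffs f B0 a0"
  shows "f \<in> Ipt p \<longleftrightarrow> (a0 0 0 = 0 \<and> a0 1 0 = 0 \<and> a0 0 1 = 0)"
proof
  assume "f \<in> Ipt p"
  then obtain B a where B: "affine_coords_at p B" and a: "local_coeffs f B a"
    and c: "a 0 0 = 0" "a 1 0 = 0" "a 0 1 = 0"
    unfolding Ipt_def by blast
  obtain N where N: "N$1$3 = 0" "N$2$3 = 0" "N$3$3 \<noteq> 0" "B ** N = B0"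
    using chart_change[of p B B0] B B0 by blast
  show "a0 0 0 = 0 \<and> a0 1 0 = 0 \<and> a0 0 1 = 0"
    by (rule inv3[OF transfer[OF f a a0 N(4) N(1) N(2)] c])
next
  assume "a0 0 0 = 0 \<and> a0 1 0 = 0 \<and> a0 0 1 = 0"
  then show "f \<in> Ipt p" unfolding Ipt_def using f B0 a0 by blast
qed

lemma L1: fixes c1 c2 c3 c4 :: real
  assumes "\<And>t. 0 \<le> c1*t + c2*t^2 + c3*t^3 + c4*t^4" shows "c1 = 0"
proof -
  have d: "DERIV (\<lambda>t. c1*t + c2*t^2 + c3*t^3 + c4*t^4) 0 :> c1"
    by (auto intro!: derivative_eq_intros)
  show ?thesis
    by (rule DERIV_local_min[OF d, of 1]) (use assms in auto)
qed

lemma L3: fixes c3 c4 :: real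
  assumes h: "\<And>t. 0 \<le> c3*t^3 + c4*t^4" shows "c3 = 0"
proof -
  have "0 \<le> c3*t + c4*t^2 + 0*t^3 + 0*t^4" for t
  proof (cases "t = 0")
    case False
    have "0 \<le> c3*t^3 + c4*t^4" by (rule h)
    also have "c3*t^3 + c4*t^4 = t^2 * (c3*t + c4*t^2)" by (simp add: algebra_simps power_numeral_reduce)
    finally have "0 \<le> t^2 * (c3*t + c4*t^2)" .
    moreover have "t^2 > 0" using False by simp
    ultimately show ?thesis by (simp add: zero_le_mult_iff)
  qed simp
  then show ?thesis by (rule L1)
qed

lemma L2: fixes c2 c3 c4 :: real
  assumes h: "\<And>t. 0 \<le> c2*t^2 + c3*t^3 + c4*t^4" shows "0 \<le> c2"
proof -
  have ev: "\<forall>\<^sub>F t in at 0. 0 \<le> c2 + c3*t + c4*t^2"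
  proof (rule eventually_at_topological[THEN iffD2], intro exI[of _ UNIV] conjI ballI impI)
    fix t :: real assume "t \<noteq> 0"
    have "0 \<le> c2*t^2 + c3*t^3 + c4*t^4" by (rule h)
    also have "c2*t^2 + c3*t^3 + c4*t^4 = t^2 * (c2 + c3*t + c4*t^2)" by (simp add: algebra_simps power_numeral_reduce)
    finally have "0 \<le> t^2 * (c2 + c3*t + c4*t^2)" .
    moreover have "t^2 > 0" using \<open>t \<noteq> 0\<close> by simp
    ultimately show "0 \<le> c2 + c3*t + c4*t^2" by (simp add: zero_le_mult_iff)
  qed auto
  have lim: "((\<lambda>t. c2 + c3*t + c4*t^2) \<longlongrightarrow> c2 + c3*0 + c4*0^2) (at (0::real))"
    by (intro tendsto_intros)
  show ?thesis using tendsto_lowerbound[OF lim ev] by simp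
qed

lemma nonneg_pt: fixes a :: "nat \<Rightarrow> nat \<Rightarrow> real"
  assumes nn: "\<And>x y. 0 \<le> (\<Sum>(i,j)\<in>DD. a i j * x^i * y^j)" and a0: "a 0 0 = 0"
  shows "a 1 0 = 0 \<and> a 0 1 = 0"
proof
  have "0 \<le> a 1 0 * t + a 2 0 * t^2 + a 3 0 * t^3 + a 4 0 * t^4" for t
    using nn[of t 0] a0 by (simp add: D4_eq)
  then show "a 1 0 = 0" by (rule L1)
  have "0 \<le> a 0 1 * t + a 0 2 * t^2 + a 0 3 * t^3 + a 0 4 * t^4" for t
    using nn[of 0 t] a0 by (simp add: D4_eq)
  then show "a 0 1 = 0" by (rule L1)
qed

lemma nonneg_line: fixes a :: "nat \<Rightarrow> nat \<Rightarrow> real"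
  assumes nn: "\<And>x y. 0 \<le> (\<Sum>(i,j)\<in>DD. a i j * x^i * y^j)"
    and a: "a 0 0 = 0" "a 1 0 = 0" "a 0 1 = 0" "a 2 0 = 0"
  shows "a 1 1 = 0 \<and> a 3 0 = 0"
proof
  have "0 \<le> a 3 0 * t^3 + a 4 0 * t^4" for t
    using nn[of t 0] a by (simp add: D4_eq)
  then show a30: "a 3 0 = 0" by (rule L3)
  have "0 \<le> a 1 1 * s + a 0 2 * s^2 + 0 * s^3 + 0 * s^4" for s
  proof -
    have "0 \<le> (a 1 1 * s + a 0 2 * s^2) * t^2 + (a 2 1 * s + a 1 2 * s^2 + a 0 3 * s^3) * t^3
       + (a 4 0 + a 3 1 * s + a 2 2 * s^2 + a 1 3 * s^3 + a 0 4 * s^4) * t^4" for t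
    proof -
      have "(\<Sum>(i,j)\<in>DD. a i j * t^i * (s*t)^j) = (a 1 1 * s + a 0 2 * s^2) * t^2 + (a 2 1 * s + a 1 2 * s^2 + a 0 3 * s^3) * t^3
       + (a 4 0 + a 3 1 * s + a 2 2 * s^2 + a 1 3 * s^3 + a 0 4 * s^4) * t^4"
        using a a30 by (simp add: D4_eq power_mult_distrib algebra_simps power_numeral_reduce)
      then show ?thesis using nn[of t "s*t"] by simp
    qed
    then have "0 \<le> a 1 1 * s + a 0 2 * s^2" by (rule L2)
    then show ?thesis by simp
  qed
  then show "a 1 1 = 0" by (rule L1)
qed

interpretation fm: module "(\<lambda>c (f::real^3\<Rightarrow>real). (\<lambda>v. c * f v))"
  by unfold_locales (auto simp: algebra_simps fun_eq_iff)

definition frm :: "(nat\<times>nat\<times>nat \<Rightarrow> real) \<Rightarrow> real^3 \<Rightarrow> real" where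
  "frm c v = (\<Sum>(i,j,k)\<in>monos4. c(i,j,k) * (v$1)^i * (v$2)^j * (v$3)^k)"

lemma frm_H4: "frm c \<in> H4" unfolding H4_def frm_def by blast
lemma H4_frm: "f \<in> H4 \<Longrightarrow> \<exists>c. f = frm c" unfolding H4_def frm_def by (auto simp: fun_eq_iff)

lemma fin_monos4[simp]: "finite monos4" by (simp add: monos4_eq)

lemma local_lin:
  assumes "local_coeffs f B a" "local_coeffs g B b"
  shows "local_coeffs (\<lambda>v. r * f v + g v) B (\<lambda>i j. r * a i j + b i j)"
  using assms unfolding local_coeffs_def
  by (simp add: sum.distrib sum_distrib_left case_prod_beta algebra_simps)

lemma local_zero: "local_coeffs (\<lambda>v. 0) B (\<lambda>i j. 0)"
  unfolding local_coeffs_def by simp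

lemma H4_lin: assumes "f \<in> H4" "g \<in> H4" shows "(\<lambda>v. r * f v + g v) \<in> H4"
proof -
  obtain c d where "f = frm c" "g = frm d" using assms H4_frm by blast
  then have "(\<lambda>v. r * f v + g v) = frm (\<lambda>m. r * c m + d m)"
    by (simp add: fun_eq_iff frm_def sum.distrib sum_distrib_left case_prod_beta algebra_simps)
  then show ?thesis by (simp add: frm_H4)
qed

lemma H4_zero: "(\<lambda>v. 0) \<in> H4"
proof -
  have "(\<lambda>v. 0) = frm (\<lambda>m. 0)" by (simp add: fun_eq_iff frm_def)
  then show ?thesis by (simp add: frm_H4)
qed

lemma subspace_intro:
  assumes "(\<lambda>v. 0) \<in> S" "\<And>r f g. f \<in> S \<Longrightarrow> g \<in> S \<Longrightarrow> (\<lambda>v. r * f v + g v) \<in> S"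
  shows "fm.subspace S"
proof (rule fm.subspaceI)
  show "0 \<in> S" using assms(1) by (simp add: zero_fun_def)
next
  fix x y assume "x \<in> S" "y \<in> S"
  then have "(\<lambda>v. 1 * x v + y v) \<in> S" by (rule assms(2))
  then show "x + y \<in> S" by (simp add: plus_fun_def)
next
  fix c x assume "x \<in> S"
  then have "(\<lambda>v. c * x v + 0) \<in> S" using assms by blast
  then show "(\<lambda>v. c * x v) \<in> S" by simp
qed

lemma H4_subspace: "fm.subspace H4"
  by (rule subspace_intro) (auto intro: H4_zero H4_lin)

lemma Ipl_subspace:
  assumes n: "n \<noteq> 0" and B0: "affine_coords_at_line p n B0"
    and ex: "\<And>f. f \<in> H4 \<Longrightarrow> \<exists>a. local_coeffs f B0 a"
  shows "fm.subspace (Ipl p n)"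
proof (rule subspace_intro)
  show "(\<lambda>v. 0) \<in> Ipl p n"
    using Ipl_canon[OF n B0 H4_zero local_zero] by simp
next
  fix r f g assume f: "f \<in> Ipl p n" and g: "g \<in> Ipl p n"
  have fH: "f \<in> H4" and gH: "g \<in> H4" using f g unfolding Ipl_def by auto
  obtain a b where a: "local_coeffs f B0 a" and b: "local_coeffs g B0 b" using ex fH gH by blast
  have ca: "a 0 0 = 0 \<and> a 1 0 = 0 \<and> a 0 1 = 0 \<and> a 2 0 = 0 \<and> a 1 1 = 0 \<and> a 3 0 = 0"
    using Ipl_canon[OF n B0 fH a] f by blast
  have cb: "b 0 0 = 0 \<and> b 1 0 = 0 \<and> b 0 1 = 0 \<and> b 2 0 = 0 \<and> b 1 1 = 0 \<and> b 3 0 = 0"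
    using Ipl_canon[OF n B0 gH b] g by blast
  show "(\<lambda>v. r * f v + g v) \<in> Ipl p n"
    using Ipl_canon[OF n B0 H4_lin[OF fH gH] local_lin[OF a b]] ca cb by simp
qed

lemma Ipt_subspace:
  assumes B0: "affine_coords_at p B0"
    and ex: "\<And>f. f \<in> H4 \<Longrightarrow> \<exists>a. local_coeffs f B0 a"
  shows "fm.subspace (Ipt p)"
proof (rule subspace_intro)
  show "(\<lambda>v. 0) \<in> Ipt p"
    using Ipt_canon[OF B0 H4_zero local_zero] by simp
next
  fix r f g assume f: "f \<in> Ipt p" and g: "g \<in> Ipt p"
  have fH: "f \<in> H4" and gH: "g \<in> H4" using f g unfolding Ipt_def by auto
  obtain a b where a: "local_coeffs f B0 a" and b: "local_coeffs g B0 b" using ex fH gH by blast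
  have ca: "a 0 0 = 0 \<and> a 1 0 = 0 \<and> a 0 1 = 0"
    using Ipt_canon[OF B0 fH a] f by blast
  have cb: "b 0 0 = 0 \<and> b 1 0 = 0 \<and> b 0 1 = 0"
    using Ipt_canon[OF B0 gH b] g by blast
  show "(\<lambda>v. r * f v + g v) \<in> Ipt p"
    using Ipt_canon[OF B0 H4_lin[OF fH gH] local_lin[OF a b]] ca cb by simp
qed

lemma local_nonneg:
  assumes "f \<in> P34" "local_coeffs f B a"
  shows "0 \<le> (\<Sum>(i,j)\<in>DD. a i j * x^i * y^j)"
  using assms unfolding P34_def local_coeffs_def by (metis (mono_tags, lifting) mem_Collect_eq)

lemma pl_FI:
  assumes n: "n \<noteq> 0" and B0: "affine_coords_at_line p n B0" and f: "f \<in> Fpl p n"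
    and ex: "\<And>f. f \<in> H4 \<Longrightarrow> \<exists>a. local_coeffs f B0 a"
  shows "f \<in> Ipl p n"
proof -
  have fP: "f \<in> P34" using f unfolding Fpl_def by auto
  then have fH: "f \<in> H4" unfolding P34_def by auto
  obtain a where a: "local_coeffs f B0 a" using ex fH by blast
  have c4: "a 0 0 = 0" "a 1 0 = 0" "a 0 1 = 0" "a 2 0 = 0" using Fpl_canon[OF n B0 fH a] f by auto
  have "a 1 1 = 0 \<and> a 3 0 = 0"
    by (rule nonneg_line[OF local_nonneg[OF fP a] c4])
  then show ?thesis using Ipl_canon[OF n B0 fH a] c4 by simp
qed

lemma pt_FI:
  assumes B0: "affine_coords_at p B0" and e: "B0 *v e3 = p" and f: "f \<in> Fpt p"
    and ex: "\<And>f. f \<in> H4 \<Longrightarrow> \<exists>a. local_coeffs f B0 a"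
  shows "f \<in> Ipt p"
proof -
  have fP: "f \<in> P34" and fp: "f p = 0" using f unfolding Fpt_def by auto
  then have fH: "f \<in> H4" unfolding P34_def by auto
  obtain a where a: "local_coeffs f B0 a" using ex fH by blast
  have "f (B0 *v vector[0,0,1]) = (\<Sum>(i,j)\<in>DD. a i j * 0^i * 0^j)"
    using a unfolding local_coeffs_def by blast
  then have a0: "a 0 0 = 0" using fp e by (simp add: D4_eq e3_def)
  have "a 1 0 = 0 \<and> a 0 1 = 0" by (rule nonneg_pt[OF local_nonneg[OF fP a] a0])
  then show ?thesis using Ipt_canon[OF B0 fH a] a0 by simp
qed

definition BA :: "real^3^3" where "BA = vector[vector[0,0,1], vector[0,1,0], vector[1,0,0]]"
definition BC :: "real^3^3" where "BC = vector[vector[0,1,0], vector[0,0,1], vector[1,0,0]]"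
definition BCi :: "real^3^3" where "BCi = vector[vector[0,0,1], vector[1,0,0], vector[0,1,0]]"
definition BD :: "real^3^3" where "BD = vector[vector[1,0,0], vector[0,1,0], vector[0,0,1]]"
definition BE :: "real^3^3" where "BE = vector[vector[0,0,1], vector[1,1,0], vector[1,0,0]]"
definition BEi :: "real^3^3" where "BEi = vector[vector[0,0,1], vector[0,1,-1], vector[1,0,0]]"

definition aA :: "(nat\<times>nat\<times>nat \<Rightarrow> real) \<Rightarrow> nat \<Rightarrow> nat \<Rightarrow> real" where "aA c k l = c(4-k-l, l, k)"
definition aC :: "(nat\<times>nat\<times>nat \<Rightarrow> real) \<Rightarrow> nat \<Rightarrow> nat \<Rightarrow> real" where "aC c k l = c(l, 4-k-l, k)"
definition aD :: "(nat\<times>nat\<times>nat \<Rightarrow> real) \<Rightarrow> nat \<Rightarrow> nat \<Rightarrow> real" where "aD c k l = c(k, l, 4-k-l)"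
definition aE :: "(nat\<times>nat\<times>nat \<Rightarrow> real) \<Rightarrow> nat \<Rightarrow> nat \<Rightarrow> real" where "aE c k l = (if (k,l) = (0,0) then c(4,0,0) else (if (k,l) = (0,1) then c(3,1,0) else (if (k,l) = (0,2) then c(2,2,0) else (if (k,l) = (0,3) then c(1,3,0) else (if (k,l) = (0,4) then c(0,4,0) else (if (k,l) = (1,0) then c(3,0,1) + c(3,1,0) else (if (k,l) = (1,1) then c(2,1,1) + 2 * c(2,2,0) else (if (k,l) = (1,2) then c(1,2,1) + 3 * c(1,3,0) else (if (k,l) = (1,3) then c(0,3,1) + 4 * c(0,4,0) else (if (k,l) = (2,0) then c(2,0,2) + c(2,1,1) + c(2,2,0) else (if (k,l) = (2,1) then c(1,1,2) + 2 * c(1,2,1) + 3 * c(1,3,0) else (if (k,l) = (2,2) then c(0,2,2) + 3 * c(0,3,1) + 6 * c(0,4,0) else (if (k,l) = (3,0) then c(1,0,3) + c(1,1,2) + c(1,2,1) + c(1,3,0) else (if (k,l) = (3,1) then c(0,1,3) + 2 * c(0,2,2) + 3 * c(0,3,1) + 4 * c(0,4,0) else (if (k,l) = (4,0) then c(0,0,4) + c(0,1,3) + c(0,2,2) + c(0,3,1) + c(0,4,0) else 0)))))))))))))))"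

lemma inv_BA: "invertible BA"
  unfolding invertible_def
  by (rule exI[of _ BA]) (simp add: BA_def vec_eq_iff matrix_matrix_mult_def sum_3 mat_def forall_3)
lemma inv_BC: "invertible BC"
  unfolding invertible_def
  by (rule exI[of _ BCi]) (simp add: BC_def BCi_def vec_eq_iff matrix_matrix_mult_def sum_3 mat_def forall_3)
lemma inv_BD: "invertible BD"
  unfolding invertible_def
  by (rule exI[of _ BD]) (simp add: BD_def vec_eq_iff matrix_matrix_mult_def sum_3 mat_def forall_3)
lemma inv_BE: "invertible BE"
  unfolding invertible_def
  by (rule exI[of _ BEi]) (simp add: BE_def BEi_def vec_eq_iff matrix_matrix_mult_def sum_3 mat_def forall_3)

lemma BA_v: "BA *v vector[x,y,z] = vector[z,y,x]" by (simp add: BA_def vec_eq_iff forall_3 mv3)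
lemma BC_v: "BC *v vector[x,y,z] = vector[y,z,x]" by (simp add: BC_def vec_eq_iff forall_3 mv3)
lemma BD_v: "BD *v vector[x,y,z] = vector[x,y,z]" by (simp add: BD_def vec_eq_iff forall_3 mv3)
lemma BE_v: "BE *v vector[x,y,z] = vector[z,x+y,x]" by (simp add: BE_def vec_eq_iff forall_3 mv3)

lemma nA: "join e1 e3 \<noteq> 0" by (simp add: join_def cross3_def e1_def e3_def vec_eq_iff forall_3)
lemma nC: "join e2 e3 \<noteq> 0" by (simp add: join_def cross3_def e2_def e3_def vec_eq_iff forall_3)
lemma nE: "join e1 e4 \<noteq> 0" by (simp add: join_def cross3_def e1_def e4_def vec_eq_iff forall_3)

lemma chartA: "affine_coords_at_line e1 (join e1 e3) BA"
  unfolding affine_coords_at_line_def affine_coords_at_def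
  using inv_BA by (simp add: e1_def e3_def BA_v on_line_def join_def cross3_def inner_vec_def sum_3 exI[of _ 1])
lemma chartC: "affine_coords_at_line e2 (join e2 e3) BC"
  unfolding affine_coords_at_line_def affine_coords_at_def
  using inv_BC by (simp add: e1_def e2_def e3_def BC_v on_line_def join_def cross3_def inner_vec_def sum_3 exI[of _ 1])
lemma chartD: "affine_coords_at e3 BD"
  unfolding affine_coords_at_def
  using inv_BD by (simp add: e3_def BD_v exI[of _ 1])
lemma chartE: "affine_coords_at_line e1 (join e1 e4) BE"
  unfolding affine_coords_at_line_def affine_coords_at_def
  using inv_BE by (simp add: e1_def e3_def e4_def BE_v on_line_def join_def cross3_def inner_vec_def sum_3 exI[of _ 1])

lemma BA_e3: "BA *v e3 = e1" by (simp add: e1_def e3_def BA_v)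
lemma BC_e3: "BC *v e3 = e2" by (simp add: e2_def e3_def BC_v)
lemma BD_e3: "BD *v e3 = e3" by (simp add: e3_def BD_v)

lemma frm_vec: "frm c (vector[x,y,z]) = c(0,0,4)*z^4 + c(0,1,3)*y*z^3 + c(0,2,2)*y^2*z^2 + c(0,3,1)*y^3*z + c(0,4,0)*y^4
  + c(1,0,3)*x*z^3 + c(1,1,2)*x*y*z^2 + c(1,2,1)*x*y^2*z + c(1,3,0)*x*y^3 + c(2,0,2)*x^2*z^2 + c(2,1,1)*x^2*y*z
  + c(2,2,0)*x^2*y^2 + c(3,0,1)*x^3*z + c(3,1,0)*x^3*y + c(4,0,0)*x^4"
  by (simp add: frm_def monos4_eq)

lemma sumD: fixes a :: "nat \<Rightarrow> nat \<Rightarrow> real" and x y :: real shows "(\<Sum>(i,j)\<in>DD. a i j * x^i * y^j) = a 0 0 + a 0 1 * y + a 0 2 * y^2 + a 0 3 * y^3 + a 0 4 * y^4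
  + a 1 0 * x + a 1 1 * x * y + a 1 2 * x * y^2 + a 1 3 * x * y^3 + a 2 0 * x^2 + a 2 1 * x^2 * y + a 2 2 * x^2 * y^2
  + a 3 0 * x^3 + a 3 1 * x^3 * y + a 4 0 * x^4"
  by (simp add: D4_eq algebra_simps)

lemma locA: "local_coeffs (frm c) BA (aA c)"
  unfolding local_coeffs_def BA_v frm_vec sumD by (simp add: aA_def)
lemma locC: "local_coeffs (frm c) BC (aC c)"
  unfolding local_coeffs_def BC_v frm_vec sumD by (simp add: aC_def)
lemma locD: "local_coeffs (frm c) BD (aD c)"
  unfolding local_coeffs_def BD_v frm_vec sumD by (simp add: aD_def)
lemma locE: "local_coeffs (frm c) BE (aE c)"
  unfolding local_coeffs_def BE_v frm_vec sumD by (simp add: aE_def algebra_simps power2_eq_square power3_eq_cube power4_eq_xxxx)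

lemma exA: "f \<in> H4 \<Longrightarrow> \<exists>a. local_coeffs f BA a" using H4_frm locA by blast
lemma exC: "f \<in> H4 \<Longrightarrow> \<exists>a. local_coeffs f BC a" using H4_frm locC by blast
lemma exD: "f \<in> H4 \<Longrightarrow> \<exists>a. local_coeffs f BD a" using H4_frm locD by blast
lemma exE: "f \<in> H4 \<Longrightarrow> \<exists>a. local_coeffs f BE a" using H4_frm locE by blast

lemma frm_gen: "frm c v = c(0,0,4)*(v$3)^4 + c(0,1,3)*(v$2)*(v$3)^3 + c(0,2,2)*(v$2)^2*(v$3)^2 + c(0,3,1)*(v$2)^3*(v$3) + c(0,4,0)*(v$2)^4
  + c(1,0,3)*(v$1)*(v$3)^3 + c(1,1,2)*(v$1)*(v$2)*(v$3)^2 + c(1,2,1)*(v$1)*(v$2)^2*(v$3) + c(1,3,0)*(v$1)*(v$2)^3 + c(2,0,2)*(v$1)^2*(v$3)^2 + c(2,1,1)*(v$1)^2*(v$2)*(v$3)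
  + c(2,2,0)*(v$1)^2*(v$2)^2 + c(3,0,1)*(v$1)^3*(v$3) + c(3,1,0)*(v$1)^3*(v$2) + c(4,0,0)*(v$1)^4"
  by (simp add: frm_def monos4_eq)

definition sqT1 :: "real \<Rightarrow> real \<Rightarrow> real \<Rightarrow> real \<Rightarrow> real^3 \<Rightarrow> real" where
  "sqT1 a b c d v = (a * (v$1 * v$2) + b * (v$2 * v$3) + c * (v$2 * v$2) + d * (v$3 * v$3))^2"

definition cT1 :: "real \<Rightarrow> real \<Rightarrow> real \<Rightarrow> real \<Rightarrow> nat \<times> nat \<times> nat \<Rightarrow> real" where
  "cT1 a b c d m = (if m = (0,0,4) then (d^2) else (if m = (0,1,3) then (2 * b * d) else (if m = (0,2,2) then (b^2 + 2 * c * d) else (if m = (0,3,1) then (2 * b * c) else (if m = (0,4,0) then (c^2) else (if m = (1,1,2) then (2 * a * d) else (if m = (1,2,1) then (2 * a * b) else (if m = (1,3,0) then (2 * a * c) else (if m = (2,2,0) then (a^2) else 0)))))))))"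

lemma sqT1_frm: "sqT1 a b c d = frm (cT1 a b c d)"
proof (rule ext)
  fix v show "sqT1 a b c d v = frm (cT1 a b c d) v"
    unfolding sqT1_def frm_gen by (simp add: cT1_def power2_eq_square power3_eq_cube power4_eq_xxxx algebra_simps)
qed

lemma sqT1_P34: "sqT1 a b c d \<in> P34"
  unfolding P34_def using frm_H4[of "cT1 a b c d"] by (simp add: sqT1_frm[symmetric] sqT1_def)

lemma sqT1_F: "sqT1 a b c d \<in> Fconf [] [(e1, join e1 e3)]"
proof -
  have e: "sqT1 a b c d e1 = 0" by (simp add: sqT1_def e1_def)
  have j: "aA (cT1 a b c d) 0 0 = 0 \<and> aA (cT1 a b c d) 1 0 = 0 \<and> aA (cT1 a b c d) 0 1 = 0 \<and> aA (cT1 a b c d) 2 0 = 0"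
    by (simp add: aA_def cT1_def)
  have "frm (cT1 a b c d) \<in> Fpl e1 (join e1 e3)"
    using Fpl_canon[OF nA chartA frm_H4 locA] sqT1_P34 e j unfolding sqT1_frm by blast
  then show ?thesis using sqT1_P34 unfolding sqT1_frm by (simp add: Fconf_def)
qed

lemma T1_sub: "fm.subspace (Iconf [] [(e1, join e1 e3)])"
proof -
  have "Iconf [] [(e1, join e1 e3)] = H4 \<inter> Ipl e1 (join e1 e3)" by (auto simp: Iconf_def)
  then show ?thesis using fm.subspace_inter[OF H4_subspace Ipl_subspace[OF nA chartA exA]] by simp
qed

lemma T1_FI: "Fconf [] [(e1, join e1 e3)] \<subseteq> Iconf [] [(e1, join e1 e3)]"
proof
  fix f assume "f \<in> Fconf [] [(e1, join e1 e3)]"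
  then have f: "f \<in> P34" "f \<in> Fpl e1 (join e1 e3)" by (simp_all add: Fconf_def)
  then have "f \<in> H4" by (simp add: P34_def)
  moreover have "f \<in> Ipl e1 (join e1 e3)" by (rule pl_FI[OF nA chartA f(2) exA])
  ultimately show "f \<in> Iconf [] [(e1, join e1 e3)]" by (simp add: Iconf_def)
qed

lemma T1_IF: "Iconf [] [(e1, join e1 e3)] \<subseteq> fm.span (Fconf [] [(e1, join e1 e3)])"
proof
  fix f assume f: "f \<in> Iconf [] [(e1, join e1 e3)]"
  then have fH: "f \<in> H4" by (simp add: Iconf_def)
  obtain c where fc: "f = frm c" using H4_frm[OF fH] by blast
  have fI: "f \<in> Ipl e1 (join e1 e3)" using f by (simp add: Iconf_def)
  have cA: "aA c 0 0 = 0 \<and> aA c 1 0 = 0 \<and> aA c 0 1 = 0 \<and> aA c 2 0 = 0 \<and> aA c 1 1 = 0 \<and> aA c 3 0 = 0"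
    using Ipl_canon[OF nA chartA frm_H4 locA] fI fc by simp
  then have h: "c(4,0,0) = 0" "c(3,0,1) = 0" "c(3,1,0) = 0" "c(2,0,2) = 0" "c(2,1,1) = 0" "c(1,0,3) = 0"
    by (simp_all add: aA_def)
  have eq: "f = (\<lambda>v. c(2,2,0) * sqT1 1 0 0 0 v) + ((\<lambda>v. (c(1,2,1)/4) * sqT1 1 1 0 0 v) + ((\<lambda>v. (-(c(1,2,1))/4) * sqT1 1 (-1) 0 0 v) + ((\<lambda>v. (c(1,3,0)/4) * sqT1 1 0 1 0 v) + ((\<lambda>v. (-(c(1,3,0))/4) * sqT1 1 0 (-1) 0 v) + ((\<lambda>v. (c(1,1,2)/4) * sqT1 1 0 0 1 v) + ((\<lambda>v. (-(c(1,1,2))/4) * sqT1 1 0 0 (-1) v) + ((\<lambda>v. c(0,2,2) * sqT1 0 1 0 0 v) + ((\<lambda>v. (c(0,3,1)/4) * sqT1 0 1 1 0 v) + ((\<lambda>v. (-(c(0,3,1))/4) * sqT1 0 1 (-1) 0 v) + ((\<lambda>v. (c(0,1,3)/4) * sqT1 0 1 0 1 v) + ((\<lambda>v. (-(c(0,1,3))/4) * sqT1 0 1 0 (-1) v) + ((\<lambda>v. c(0,4,0) * sqT1 0 0 1 0 v) + ((\<lambda>v. c(0,0,4) * sqT1 0 0 0 1 v))))))))))))))"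
    unfolding fc by (simp add: fun_eq_iff frm_gen sqT1_def h[unfolded One_nat_def] One_nat_def algebra_simps power2_eq_square power3_eq_cube power4_eq_xxxx)
  show "f \<in> fm.span (Fconf [] [(e1, join e1 e3)])" unfolding eq by (intro fm.span_add fm.span_scale fm.span_base sqT1_F)
qed

lemma T1_main: "fspan (Fconf [] [(e1, join e1 e3)]) = Iconf [] [(e1, join e1 e3)]"
  unfolding fspan_def using fm.span_minimal[OF T1_FI T1_sub] T1_IF by blast

lemma chartC': "affine_coords_at e2 BC" using chartC unfolding affine_coords_at_line_def by blast

definition sqT2 :: "real \<Rightarrow> real \<Rightarrow> real \<Rightarrow> real^3 \<Rightarrow> real" where
  "sqT2 a b c v = (a * (v$1 * v$2) + b * (v$2 * v$3) + c * (v$3 * v$3))^2"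

definition cT2 :: "real \<Rightarrow> real \<Rightarrow> real \<Rightarrow> nat \<times> nat \<times> nat \<Rightarrow> real" where
  "cT2 a b c m = (if m = (0,0,4) then (c^2) else (if m = (0,1,3) then (2 * b * c) else (if m = (0,2,2) then (b^2) else (if m = (1,1,2) then (2 * a * c) else (if m = (1,2,1) then (2 * a * b) else (if m = (2,2,0) then (a^2) else 0))))))"

lemma sqT2_frm: "sqT2 a b c = frm (cT2 a b c)"
proof (rule ext)
  fix v show "sqT2 a b c v = frm (cT2 a b c) v"
    unfolding sqT2_def frm_gen by (simp add: cT2_def power2_eq_square power3_eq_cube power4_eq_xxxx algebra_simps)
qed

lemma sqT2_P34: "sqT2 a b c \<in> P34"
  unfolding P34_def using frm_H4[of "cT2 a b c"] by (simp add: sqT2_frm[symmetric] sqT2_def)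

lemma sqT2_F: "sqT2 a b c \<in> Fconf [e2] [(e1, join e1 e3)]"
proof -
  have e: "sqT2 a b c e1 = 0" by (simp add: sqT2_def e1_def)
  have e2: "sqT2 a b c e2 = 0" by (simp add: sqT2_def e2_def)
  have j: "aA (cT2 a b c) 0 0 = 0 \<and> aA (cT2 a b c) 1 0 = 0 \<and> aA (cT2 a b c) 0 1 = 0 \<and> aA (cT2 a b c) 2 0 = 0"
    by (simp add: aA_def cT2_def)
  have "frm (cT2 a b c) \<in> Fpl e1 (join e1 e3)"
    using Fpl_canon[OF nA chartA frm_H4 locA] sqT2_P34 e j unfolding sqT2_frm by blast
  then show ?thesis using sqT2_P34 e2 unfolding sqT2_frm by (simp add: Fconf_def Fpt_def)
qed

lemma T2_sub: "fm.subspace (Iconf [e2] [(e1, join e1 e3)])"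
proof -
  have "Iconf [e2] [(e1, join e1 e3)] = (H4 \<inter> Ipt e2) \<inter> Ipl e1 (join e1 e3)" by (auto simp: Iconf_def)
  then show ?thesis using fm.subspace_inter[OF fm.subspace_inter[OF H4_subspace Ipt_subspace[OF chartC' exC]]
     Ipl_subspace[OF nA chartA exA]] by simp
qed

lemma T2_FI: "Fconf [e2] [(e1, join e1 e3)] \<subseteq> Iconf [e2] [(e1, join e1 e3)]"
proof
  fix f assume "f \<in> Fconf [e2] [(e1, join e1 e3)]"
  then have f: "f \<in> P34" "f \<in> Fpl e1 (join e1 e3)" "f \<in> Fpt e2" by (simp_all add: Fconf_def)
  then have "f \<in> H4" by (simp add: P34_def)
  moreover have "f \<in> Ipl e1 (join e1 e3)" by (rule pl_FI[OF nA chartA f(2) exA])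
  moreover have "f \<in> Ipt e2" by (rule pt_FI[OF chartC' BC_e3 f(3) exC])
  ultimately show "f \<in> Iconf [e2] [(e1, join e1 e3)]" by (simp add: Iconf_def)
qed

lemma T2_IF: "Iconf [e2] [(e1, join e1 e3)] \<subseteq> fm.span (Fconf [e2] [(e1, join e1 e3)])"
proof
  fix f assume f: "f \<in> Iconf [e2] [(e1, join e1 e3)]"
  then have fH: "f \<in> H4" by (simp add: Iconf_def)
  obtain c where fc: "f = frm c" using H4_frm[OF fH] by blast
  have fI: "f \<in> Ipl e1 (join e1 e3)" "f \<in> Ipt e2" using f by (simp_all add: Iconf_def)
  have cA: "aA c 0 0 = 0 \<and> aA c 1 0 = 0 \<and> aA c 0 1 = 0 \<and> aA c 2 0 = 0 \<and> aA c 1 1 = 0 \<and> aA c 3 0 = 0"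
    using Ipl_canon[OF nA chartA frm_H4 locA] fI fc by simp
  have cC: "aC c 0 0 = 0 \<and> aC c 1 0 = 0 \<and> aC c 0 1 = 0"
    using Ipt_canon[OF chartC' frm_H4 locC] fI fc by simp
  have h: "c(4,0,0) = 0" "c(3,0,1) = 0" "c(3,1,0) = 0" "c(2,0,2) = 0" "c(2,1,1) = 0" "c(1,0,3) = 0"
    "c(0,4,0) = 0" "c(0,3,1) = 0" "c(1,3,0) = 0"
    using cA cC by (simp_all add: aA_def aC_def)
  have eq: "f = (\<lambda>v. c(2,2,0) * sqT2 1 0 0 v) + ((\<lambda>v. (c(1,2,1)/4) * sqT2 1 1 0 v) + ((\<lambda>v. (-(c(1,2,1))/4) * sqT2 1 (-1) 0 v) + ((\<lambda>v. (c(1,1,2)/4) * sqT2 1 0 1 v) + ((\<lambda>v. (-(c(1,1,2))/4) * sqT2 1 0 (-1) v) + ((\<lambda>v. c(0,2,2) * sqT2 0 1 0 v) + ((\<lambda>v. (c(0,1,3)/4) * sqT2 0 1 1 v) + ((\<lambda>v. (-(c(0,1,3))/4) * sqT2 0 1 (-1) v) + ((\<lambda>v. c(0,0,4) * sqT2 0 0 1 v)))))))))"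
    unfolding fc by (simp add: fun_eq_iff frm_gen sqT2_def h[unfolded One_nat_def] One_nat_def algebra_simps power2_eq_square power3_eq_cube power4_eq_xxxx)
  show "f \<in> fm.span (Fconf [e2] [(e1, join e1 e3)])" unfolding eq by (intro fm.span_add fm.span_scale fm.span_base sqT2_F)
qed

lemma T2_main: "fspan (Fconf [e2] [(e1, join e1 e3)]) = Iconf [e2] [(e1, join e1 e3)]"
  unfolding fspan_def using fm.span_minimal[OF T2_FI T2_sub] T2_IF by blast


definition sqT3 :: "real \<Rightarrow> real \<Rightarrow> real^3 \<Rightarrow> real" where
  "sqT3 a b v = (a * (v$1 * v$2) + b * (v$3 * v$3))^2"

definition cT3 :: "real \<Rightarrow> real \<Rightarrow> nat \<times> nat \<times> nat \<Rightarrow> real" where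
  "cT3 a b m = (if m = (0,0,4) then (b^2) else (if m = (1,1,2) then (2 * a * b) else (if m = (2,2,0) then (a^2) else 0)))"

lemma sqT3_frm: "sqT3 a b = frm (cT3 a b)"
proof (rule ext)
  fix v show "sqT3 a b v = frm (cT3 a b) v"
    unfolding sqT3_def frm_gen by (simp add: cT3_def power2_eq_square power3_eq_cube power4_eq_xxxx algebra_simps)
qed

lemma sqT3_P34: "sqT3 a b \<in> P34"
  unfolding P34_def using frm_H4[of "cT3 a b"] by (simp add: sqT3_frm[symmetric] sqT3_def)

lemma sqT3_F: "sqT3 a b \<in> Fconf [] [(e1, join e1 e3), (e2, join e2 e3)]"
proof -
  have e: "sqT3 a b e1 = 0" by (simp add: sqT3_def e1_def)
  have e2: "sqT3 a b e2 = 0" by (simp add: sqT3_def e2_def)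
  have j: "aA (cT3 a b) 0 0 = 0 \<and> aA (cT3 a b) 1 0 = 0 \<and> aA (cT3 a b) 0 1 = 0 \<and> aA (cT3 a b) 2 0 = 0"
    by (simp add: aA_def cT3_def)
  have j2: "aC (cT3 a b) 0 0 = 0 \<and> aC (cT3 a b) 1 0 = 0 \<and> aC (cT3 a b) 0 1 = 0 \<and> aC (cT3 a b) 2 0 = 0"
    by (simp add: aC_def cT3_def)
  have "frm (cT3 a b) \<in> Fpl e1 (join e1 e3)"
    using Fpl_canon[OF nA chartA frm_H4 locA] sqT3_P34 e j unfolding sqT3_frm by blast
  moreover have "frm (cT3 a b) \<in> Fpl e2 (join e2 e3)"
    using Fpl_canon[OF nC chartC frm_H4 locC] sqT3_P34 e2 j2 unfolding sqT3_frm by blast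
  ultimately show ?thesis using sqT3_P34 unfolding sqT3_frm by (simp add: Fconf_def)
qed

lemma T3_sub: "fm.subspace (Iconf [] [(e1, join e1 e3), (e2, join e2 e3)])"
proof -
  have "Iconf [] [(e1, join e1 e3), (e2, join e2 e3)] = (H4 \<inter> Ipl e1 (join e1 e3)) \<inter> Ipl e2 (join e2 e3)" by (auto simp: Iconf_def)
  then show ?thesis using fm.subspace_inter[OF fm.subspace_inter[OF H4_subspace Ipl_subspace[OF nA chartA exA]]
     Ipl_subspace[OF nC chartC exC]] by simp
qed

lemma T3_FI: "Fconf [] [(e1, join e1 e3), (e2, join e2 e3)] \<subseteq> Iconf [] [(e1, join e1 e3), (e2, join e2 e3)]"
proof
  fix f assume "f \<in> Fconf [] [(e1, join e1 e3), (e2, join e2 e3)]"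
  then have f: "f \<in> P34" "f \<in> Fpl e1 (join e1 e3)" "f \<in> Fpl e2 (join e2 e3)" by (simp_all add: Fconf_def)
  then have "f \<in> H4" by (simp add: P34_def)
  moreover have "f \<in> Ipl e1 (join e1 e3)" by (rule pl_FI[OF nA chartA f(2) exA])
  moreover have "f \<in> Ipl e2 (join e2 e3)" by (rule pl_FI[OF nC chartC f(3) exC])
  ultimately show "f \<in> Iconf [] [(e1, join e1 e3), (e2, join e2 e3)]" by (simp add: Iconf_def)
qed

lemma T3_IF: "Iconf [] [(e1, join e1 e3), (e2, join e2 e3)] \<subseteq> fm.span (Fconf [] [(e1, join e1 e3), (e2, join e2 e3)])"
proof
  fix f assume f: "f \<in> Iconf [] [(e1, join e1 e3), (e2, join e2 e3)]"
  then have fH: "f \<in> H4" by (simp add: Iconf_def)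
  obtain c where fc: "f = frm c" using H4_frm[OF fH] by blast
  have fI: "f \<in> Ipl e1 (join e1 e3)" "f \<in> Ipl e2 (join e2 e3)" using f by (simp_all add: Iconf_def)
  have cA: "aA c 0 0 = 0 \<and> aA c 1 0 = 0 \<and> aA c 0 1 = 0 \<and> aA c 2 0 = 0 \<and> aA c 1 1 = 0 \<and> aA c 3 0 = 0"
    using Ipl_canon[OF nA chartA frm_H4 locA] fI fc by simp
  have cC: "aC c 0 0 = 0 \<and> aC c 1 0 = 0 \<and> aC c 0 1 = 0 \<and> aC c 2 0 = 0 \<and> aC c 1 1 = 0 \<and> aC c 3 0 = 0"
    using Ipl_canon[OF nC chartC frm_H4 locC] fI fc by simp
  have h: "c(4,0,0) = 0" "c(3,0,1) = 0" "c(3,1,0) = 0" "c(2,0,2) = 0" "c(2,1,1) = 0" "c(1,0,3) = 0"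
    "c(0,4,0) = 0" "c(0,3,1) = 0" "c(1,3,0) = 0" "c(0,2,2) = 0" "c(1,2,1) = 0" "c(0,1,3) = 0"
    using cA cC by (simp_all add: aA_def aC_def)
  have eq: "f = (\<lambda>v. c(2,2,0) * sqT3 1 0 v) + ((\<lambda>v. (c(1,1,2)/4) * sqT3 1 1 v) + ((\<lambda>v. (-(c(1,1,2))/4) * sqT3 1 (-1) v) + ((\<lambda>v. c(0,0,4) * sqT3 0 1 v))))"
    unfolding fc by (simp add: fun_eq_iff frm_gen sqT3_def h[unfolded One_nat_def] One_nat_def algebra_simps power2_eq_square power3_eq_cube power4_eq_xxxx)
  show "f \<in> fm.span (Fconf [] [(e1, join e1 e3), (e2, join e2 e3)])" unfolding eq by (intro fm.span_add fm.span_scale fm.span_base sqT3_F)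
qed

lemma T3_main: "fspan (Fconf [] [(e1, join e1 e3), (e2, join e2 e3)]) = Iconf [] [(e1, join e1 e3), (e2, join e2 e3)]"
  unfolding fspan_def using fm.span_minimal[OF T3_FI T3_sub] T3_IF by blast


definition sqT4 :: "real \<Rightarrow> real \<Rightarrow> real^3 \<Rightarrow> real" where
  "sqT4 a b v = (a * (v$1 * v$2 + (-1) * v$1 * v$3) + b * (v$2 * v$3))^2"

definition cT4 :: "real \<Rightarrow> real \<Rightarrow> nat \<times> nat \<times> nat \<Rightarrow> real" where
  "cT4 a b m = (if m = (0,2,2) then (b^2) else (if m = (1,1,2) then (-2 * a * b) else (if m = (1,2,1) then (2 * a * b) else (if m = (2,0,2) then (a^2) else (if m = (2,1,1) then (-2 * a^2) else (if m = (2,2,0) then (a^2) else 0))))))"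

lemma sqT4_frm: "sqT4 a b = frm (cT4 a b)"
proof (rule ext)
  fix v show "sqT4 a b v = frm (cT4 a b) v"
    unfolding sqT4_def frm_gen by (simp add: cT4_def power2_eq_square power3_eq_cube power4_eq_xxxx algebra_simps)
qed

lemma sqT4_P34: "sqT4 a b \<in> P34"
  unfolding P34_def using frm_H4[of "cT4 a b"] by (simp add: sqT4_frm[symmetric] sqT4_def)

lemma sqT4_F: "sqT4 a b \<in> Fconf [e2, e3] [(e1, join e1 e4)]"
proof -
  have e: "sqT4 a b e1 = 0" by (simp add: sqT4_def e1_def)
  have e2: "sqT4 a b e2 = 0" by (simp add: sqT4_def e2_def)
  have e3: "sqT4 a b e3 = 0" by (simp add: sqT4_def e3_def)
  have j: "aE (cT4 a b) 0 0 = 0 \<and> aE (cT4 a b) 1 0 = 0 \<and> aE (cT4 a b) 0 1 = 0 \<and> aE (cT4 a b) 2 0 = 0"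
    by (simp add: aE_def cT4_def)
  have "frm (cT4 a b) \<in> Fpl e1 (join e1 e4)"
    using Fpl_canon[OF nE chartE frm_H4 locE] sqT4_P34 e j unfolding sqT4_frm by blast
  then show ?thesis using sqT4_P34 e2 e3 unfolding sqT4_frm by (simp add: Fconf_def Fpt_def)
qed

lemma T4_sub: "fm.subspace (Iconf [e2, e3] [(e1, join e1 e4)])"
proof -
  have "Iconf [e2, e3] [(e1, join e1 e4)] = ((H4 \<inter> Ipt e2) \<inter> Ipt e3) \<inter> Ipl e1 (join e1 e4)" by (auto simp: Iconf_def)
  then show ?thesis using fm.subspace_inter[OF fm.subspace_inter[OF fm.subspace_inter[OF H4_subspace Ipt_subspace[OF chartC' exC]]
     Ipt_subspace[OF chartD exD]] Ipl_subspace[OF nE chartE exE]] by simp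
qed

lemma T4_FI: "Fconf [e2, e3] [(e1, join e1 e4)] \<subseteq> Iconf [e2, e3] [(e1, join e1 e4)]"
proof
  fix f assume "f \<in> Fconf [e2, e3] [(e1, join e1 e4)]"
  then have f: "f \<in> P34" "f \<in> Fpl e1 (join e1 e4)" "f \<in> Fpt e2" "f \<in> Fpt e3" by (simp_all add: Fconf_def)
  then have "f \<in> H4" by (simp add: P34_def)
  moreover have "f \<in> Ipl e1 (join e1 e4)" by (rule pl_FI[OF nE chartE f(2) exE])
  moreover have "f \<in> Ipt e2" by (rule pt_FI[OF chartC' BC_e3 f(3) exC])
  moreover have "f \<in> Ipt e3" by (rule pt_FI[OF chartD BD_e3 f(4) exD])
  ultimately show "f \<in> Iconf [e2, e3] [(e1, join e1 e4)]" by (simp add: Iconf_def)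
qed

lemma T4_IF: "Iconf [e2, e3] [(e1, join e1 e4)] \<subseteq> fm.span (Fconf [e2, e3] [(e1, join e1 e4)])"
proof
  fix f assume f: "f \<in> Iconf [e2, e3] [(e1, join e1 e4)]"
  then have fH: "f \<in> H4" by (simp add: Iconf_def)
  obtain c where fc: "f = frm c" using H4_frm[OF fH] by blast
  have fI: "f \<in> Ipl e1 (join e1 e4)" "f \<in> Ipt e2" "f \<in> Ipt e3" using f by (simp_all add: Iconf_def)
  have cE: "aE c 0 0 = 0 \<and> aE c 1 0 = 0 \<and> aE c 0 1 = 0 \<and> aE c 2 0 = 0 \<and> aE c 1 1 = 0 \<and> aE c 3 0 = 0"
    using Ipl_canon[OF nE chartE frm_H4 locE] fI fc by simp
  have cC: "aC c 0 0 = 0 \<and> aC c 1 0 = 0 \<and> aC c 0 1 = 0"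
    using Ipt_canon[OF chartC' frm_H4 locC] fI fc by simp
  have cD: "aD c 0 0 = 0 \<and> aD c 1 0 = 0 \<and> aD c 0 1 = 0"
    using Ipt_canon[OF chartD frm_H4 locD] fI fc by simp
  have z: "c(0,4,0) = 0" "c(0,3,1) = 0" "c(1,3,0) = 0" "c(0,0,4) = 0" "c(1,0,3) = 0" "c(0,1,3) = 0"
    using cC cD by (simp_all add: aC_def aD_def)
  have e: "c(4,0,0) = 0" "c(3,0,1) + c(3,1,0) = 0" "c(3,1,0) = 0" "c(2,0,2) + c(2,1,1) + c(2,2,0) = 0"
    "c(2,1,1) + 2 * c(2,2,0) = 0" "c(1,0,3) + c(1,1,2) + c(1,2,1) + c(1,3,0) = 0"
    using cE by (simp_all add: aE_def)
  have h: "c(0,4,0) = 0" "c(0,3,1) = 0" "c(1,3,0) = 0" "c(0,0,4) = 0" "c(1,0,3) = 0" "c(0,1,3) = 0"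
    "c(4,0,0) = 0" "c(3,1,0) = 0" "c(3,0,1) = 0" "c(2,1,1) = -2 * c(2,2,0)" "c(2,0,2) = c(2,2,0)"
    "c(1,1,2) = - c(1,2,1)"
    using z e by linarith+
  have eq: "f = (\<lambda>v. c(2,2,0) * sqT4 1 0 v) + ((\<lambda>v. (c(1,2,1)/4) * sqT4 1 1 v) + ((\<lambda>v. (-(c(1,2,1))/4) * sqT4 1 (-1) v) + ((\<lambda>v. c(0,2,2) * sqT4 0 1 v))))"
    unfolding fc by (simp add: fun_eq_iff frm_gen sqT4_def h[unfolded One_nat_def] One_nat_def algebra_simps power2_eq_square power3_eq_cube power4_eq_xxxx)
  show "f \<in> fm.span (Fconf [e2, e3] [(e1, join e1 e4)])" unfolding eq by (intro fm.span_add fm.span_scale fm.span_base sqT4_F)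
qed

lemma T4_main: "fspan (Fconf [e2, e3] [(e1, join e1 e4)]) = Iconf [e2, e3] [(e1, join e1 e4)]"
  unfolding fspan_def using fm.span_minimal[OF T4_FI T4_sub] T4_IF by blast


theorem mainTheorem10:
  shows "fspan (Fconf [] [(e1, join e1 e3)]) = Iconf [] [(e1, join e1 e3)] \<and>
         fspan (Fconf [e2] [(e1, join e1 e3)]) = Iconf [e2] [(e1, join e1 e3)] \<and>
         fspan (Fconf [] [(e1, join e1 e3), (e2, join e2 e3)])
           = Iconf [] [(e1, join e1 e3), (e2, join e2 e3)] \<and>
         fspan (Fconf [e2, e3] [(e1, join e1 e4)]) = Iconf [e2, e3] [(e1, join e1 e4)]"
  using T1_main T2_main T3_main T4_main by blast

end
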